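(* Consider the SDP pair and one-step ADMM in the context, with $\mathcal A$ surjective and nonempty KKT set, and let $Z_\star=X_\star-\sigma S_\star$ be the limit of $Z^{(k)}$, where $(X_\star,y_\star,S_\star)$ is a KKT point (strict complementarity is not assumed). Suppose primal nondegeneracy $\mathcal N_{X_\star}\cap\mathcal R(\mathcal A^* )=\{0\}$ and dual nondegeneracy $\mathcal N_{S_\star}\cap\mathcal N(\mathcal A)=\{0\}$ hold. Define $\rho_{\mathrm{ND}}:=\sup_{\|H\|_F=1}\|\widetilde{\mathcal M}(H)\|_F$. Then $\rho_{\mathrm{ND}}<1$, and for any $\rho\in(\rho_{\mathrm{ND}},1)$ there exists $\bar k_{\mathrm{ND}}\in\mathbb N$ such that $\|Z^{(k+1)}-Z_\star\|_F\le\rho\|Z^{(k)}-Z_\star\|_F$ for all integers $k\ge\bar k_{\mathrm{ND}}$.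
   Context: $\mathbb S^n$: real symmetric matrices, trace inner product, Frobenius norm; $\Pi_{\mathbb S^p_+}$ the projection onto the $p\times p$ PSD cone. Data $C,A_i\in\mathbb S^n$, $b\in\mathbb R^m$, $\mathcal AX=(\langle A_i,X\rangle)_i$, $\mathcal A^*y=\sum y_iA_i$, $\mathcal R(\mathcal A^* )$ its range, $\mathcal N(\mathcal A)$ null space. Primal: min $\langle C,X\rangle$ s.t. $\mathcal AX=b$, $X\succeq0$; dual: max $b^\top y$ s.t. $\mathcal A^*y+S=C$, $S\succeq0$; KKT point: primal/dual feasible with $\langle X,S\rangle=0$. $\mathcal P=\mathcal A^*(\mathcal A\mathcal A^* )^{-1}\mathcal A$, $\mathcal P^\perp=\mathrm{Id}-\mathcal P$. For $\sigma>0$, one-step ADMM: $Z^{(k+1)}=\mathcal P(-2\Pi_{\mathbb S^n_+}(Z^{(k)})+Z^{(k)})+\Pi_{\mathbb S^n_+}(Z^{(k)})+\mathcal A^*(\mathcal A\mathcal A^* )^{-1}b+\sigma\mathcal PC-\sigma C$. Let $r=\operatorname{rank}X_\star$, $s=\operatorname{rank}S_\star$ ($r+s\le n$); there is an orthogonal $Q_\star$ with $Z_\star=Q_\star\operatorname{diag}(\lambda_1,\dots,\lambda_n)Q_\star^\top$, $\lambda_1\ge\dots\ge\lambda_r>0=\lambda_{r+1}=\dots=\lambda_{n-s}>\lambda_{n-s+1}\ge\dots\ge\lambda_n$, $X_\star=Q_\star\operatorname{diag}(\lambda_1,..,\lambda_r,0,..,0)Q_\star^\top$, $\sigma S_\star=Q_\star\operatorname{diag}(0,..,0,-\lambda_{n-s+1},..,-\lambda_n)Q_\star^\top$.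 Index sets $\alpha=\{1,..,r\}$, $\beta=\{r+1,..,n-s\}$, $\gamma=\{n-s+1,..,n\}$; for $H\in\mathbb S^n$ write $\hat H=Q_\star^\top HQ_\star$ with blocks $\hat H_{\alpha\alpha},\hat H_{\beta\alpha},\hat H_{\gamma\alpha},\hat H_{\beta\beta},\hat H_{\gamma\beta},\hat H_{\gamma\gamma}$. Let $\tilde\Theta\in\mathbb R^{s\times r}$, $\tilde\Theta_{ij}=\lambda_j/(\lambda_j-\lambda_{n-s+i})$. Define $\widetilde{\mathcal D}(H)=Q_\star\begin{pmatrix}\hat H_{\alpha\alpha}&\hat H_{\beta\alpha}^\top&\tilde\Theta^\top\circ\hat H_{\gamma\alpha}^\top\\ \hat H_{\beta\alpha}&\Pi_{\mathbb S^{|\beta|}_+}(\hat H_{\beta\beta})&0\\ \tilde\Theta\circ\hat H_{\gamma\alpha}&0&0\end{pmatrix}Q_\star^\top$ ($\circ$ Hadamard product), $\widetilde{\mathcal D}^\perp(H)=H-\widetilde{\mathcal D}(H)$, $\widetilde{\mathcal M}(H)=\mathcal P\widetilde{\mathcal D}^\perp(H)+\mathcal P^\perp\widetilde{\mathcal D}(H)$. $\mathcal N_{X_\star}=\{Q_\star\begin{pmatrix}0&0\\0&D\end{pmatrix}Q_\star^\top:D\in\mathbb S^{n-r}\}$, $\mathcal N_{S_\star}=\{Q_\star\begin{pmatrix}A&0\\0&0\end{pmatrix}Q_\star^\top:A\in\mathbb S^{n-s}\}$. *)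

theory Defs
  imports "HOL-Analysis.Analysis"
begin

text \<open>Matrices in S^n are represented as real^'n^'n (with transpose M = M).
  The inner product \<bullet> on real^'n^'n is the trace inner product and norm is
  the Frobenius norm.\<close>

definition psd :: "real^'n^'n \<Rightarrow> bool" where
  "psd M \<longleftrightarrow> transpose M = M \<and> (\<forall>x. 0 \<le> x \<bullet> (M *v x))"

definition proj_onto :: "'a::metric_space set \<Rightarrow> 'a \<Rightarrow> 'a" where
  "proj_onto K M = (THE P. P \<in> K \<and> (\<forall>Q\<in>K. dist M P \<le> dist M Q))"

definition projPSD :: "real^'n^'n \<Rightarrow> real^'n^'n" where
  "projPSD M = proj_onto {N. psd N} M"

text \<open>PSD cone of matrices supported on the block beta x beta (a copy of S^|beta|_+).\<close>
definition projPSD_block :: "'n set \<Rightarrow> real^'n^'n \<Rightarrow> real^'n^'n" where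
  "projPSD_block \<beta> M = proj_onto {N. psd N \<and> (\<forall>i j. N$i$j \<noteq> 0 \<longrightarrow> i \<in> \<beta> \<and> j \<in> \<beta>)}
      (\<chi> i j. if i \<in> \<beta> \<and> j \<in> \<beta> then M$i$j else 0)"

definition opA :: "('m::finite \<Rightarrow> real^'n^'n) \<Rightarrow> real^'n^'n \<Rightarrow> real^'m" where
  "opA A X = (\<chi> i. A i \<bullet> X)"

definition opAadj :: "('m::finite \<Rightarrow> real^'n^'n) \<Rightarrow> real^'m \<Rightarrow> real^'n^'n" where
  "opAadj A y = (\<Sum>i\<in>UNIV. y$i *\<^sub>R A i)"

definition gramA :: "('m::finite \<Rightarrow> real^'n^'n) \<Rightarrow> real^'m^'m" where
  "gramA A = (\<chi> i j. A i \<bullet> A j)"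

definition projP :: "('m::finite \<Rightarrow> real^'n^'n) \<Rightarrow> real^'n^'n \<Rightarrow> real^'n^'n" where
  "projP A H = opAadj A (matrix_inv (gramA A) *v opA A H)"

definition admm_step :: "('m::finite \<Rightarrow> real^'n^'n) \<Rightarrow> real^'m \<Rightarrow> real^'n^'n \<Rightarrow> real
     \<Rightarrow> real^'n^'n \<Rightarrow> real^'n^'n" where
  "admm_step A b C \<sigma> Z =
     projP A (Z - 2 *\<^sub>R projPSD Z) + projPSD Z + opAadj A (matrix_inv (gramA A) *v b)
     + \<sigma> *\<^sub>R projP A C - \<sigma> *\<^sub>R C"

definition is_KKT :: "('m::finite \<Rightarrow> real^'n^'n) \<Rightarrow> real^'m \<Rightarrow> real^'n^'n
     \<Rightarrow> real^'n^'n \<Rightarrow> real^'m \<Rightarrow> real^'n^'n \<Rightarrow> bool" where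
  "is_KKT A b C X y S \<longleftrightarrow> opA A X = b \<and> psd X \<and> opAadj A y + S = C \<and> psd S \<and> X \<bullet> S = 0"

definition diagm :: "('n \<Rightarrow> real) \<Rightarrow> real^'n^'n" where
  "diagm d = (\<chi> i j. if i = j then d i else 0)"

definition hatm :: "real^'n^'n \<Rightarrow> real^'n^'n \<Rightarrow> real^'n^'n" where
  "hatm Q H = transpose Q ** H ** Q"

text \<open>alpha = {i. lam i > 0}, beta = {i. lam i = 0}, gamma = {i. lam i < 0}.\<close>
definition Dtilde :: "real^'n^'n \<Rightarrow> ('n \<Rightarrow> real) \<Rightarrow> real^'n^'n \<Rightarrow> real^'n^'n" where
  "Dtilde Q lam H =
    (let Hh = hatm Q H;
         Bb = projPSD_block {i. lam i = 0} Hh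
     in Q ** (\<chi> i j.
          if (lam i > 0 \<and> lam j \<ge> 0) \<or> (lam i \<ge> 0 \<and> lam j > 0) then Hh$i$j
          else if lam i = 0 \<and> lam j = 0 then Bb$i$j
          else if lam i < 0 \<and> lam j > 0 then lam j / (lam j - lam i) * Hh$i$j
          else if lam i > 0 \<and> lam j < 0 then lam i / (lam i - lam j) * Hh$j$i
          else 0) ** transpose Q)"

definition Mtilde :: "('m::finite \<Rightarrow> real^'n^'n) \<Rightarrow> real^'n^'n \<Rightarrow> ('n \<Rightarrow> real)
     \<Rightarrow> real^'n^'n \<Rightarrow> real^'n^'n" where
  "Mtilde A Q lam H =
     projP A (H - Dtilde Q lam H) + (Dtilde Q lam H - projP A (Dtilde Q lam H))"

definition NX :: "real^'n^'n \<Rightarrow> ('n \<Rightarrow> real) \<Rightarrow> (real^'n^'n) set" where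
  "NX Q lam = {Q ** M ** transpose Q | M. transpose M = M \<and>
                  (\<forall>i j. lam i > 0 \<or> lam j > 0 \<longrightarrow> M$i$j = 0)}"

definition NS :: "real^'n^'n \<Rightarrow> ('n \<Rightarrow> real) \<Rightarrow> (real^'n^'n) set" where
  "NS Q lam = {Q ** M ** transpose Q | M. transpose M = M \<and>
                  (\<forall>i j. lam i < 0 \<or> lam j < 0 \<longrightarrow> M$i$j = 0)}"

end

theory Submission
  imports Defs
begin
lemma inner_mat: "(A::real^'n^'n) \<bullet> B = (\<Sum>i\<in>UNIV. \<Sum>j\<in>UNIV. A$i$j * B$i$j)"
  by (simp add: inner_vec_def)

lemma entry_le_norm: "\<bar>(A::real^'n^'n)$i$j\<bar> \<le> norm A"
proof -
  have "norm (A$i$j) \<le> norm (A$i)" by (rule Finite_Cartesian_Product.norm_nth_le)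
  also have "\<dots> \<le> norm A" by (rule Finite_Cartesian_Product.norm_nth_le)
  finally show ?thesis by simp
qed

lemma norm_le_sum_entries: "norm (A::real^'n^'n) \<le> (\<Sum>i\<in>UNIV. \<Sum>j\<in>UNIV. \<bar>A$i$j\<bar>)"
proof -
  have "norm A \<le> (\<Sum>i\<in>UNIV. norm (A$i))" by (simp add: norm_vec_def L2_set_le_sum)
  also have "\<dots> \<le> (\<Sum>i\<in>UNIV. \<Sum>j\<in>UNIV. \<bar>A$i$j\<bar>)"
    by (rule sum_mono) (metis norm_le_l1_cart real_norm_def)
  finally show ?thesis .
qed

lemma inner_mult_left: "((A::real^'n^'n) ** X) \<bullet> Y = X \<bullet> (transpose A ** Y)"
proof -
  have "((A::real^'n^'n) ** X) \<bullet> Y = (\<Sum>i\<in>UNIV. \<Sum>j\<in>UNIV. \<Sum>k\<in>UNIV. A$i$k * X$k$j * Y$i$j)"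
    by (simp add: inner_vec_def matrix_matrix_mult_def sum_distrib_right)
  also have "\<dots> = (\<Sum>j\<in>UNIV. \<Sum>i\<in>UNIV. \<Sum>k\<in>UNIV. A$i$k * X$k$j * Y$i$j)"
    by (rule sum.swap)
  also have "\<dots> = (\<Sum>j\<in>UNIV. \<Sum>k\<in>UNIV. \<Sum>i\<in>UNIV. A$i$k * X$k$j * Y$i$j)"
    by (rule sum.cong[OF refl], rule sum.swap)
  also have "\<dots> = (\<Sum>k\<in>UNIV. \<Sum>j\<in>UNIV. \<Sum>i\<in>UNIV. A$i$k * X$k$j * Y$i$j)"
    by (rule sum.swap)
  also have "\<dots> = X \<bullet> (transpose A ** Y)"
    by (simp add: inner_vec_def matrix_matrix_mult_def transpose_def sum_distrib_left mult_ac)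
  finally show ?thesis .
qed

lemma inner_mult_right: "((X::real^'n^'n) ** A) \<bullet> Y = X \<bullet> (Y ** transpose A)"
proof -
  have "((X::real^'n^'n) ** A) \<bullet> Y = (\<Sum>i\<in>UNIV. \<Sum>j\<in>UNIV. \<Sum>k\<in>UNIV. X$i$k * A$k$j * Y$i$j)"
    by (simp add: inner_vec_def matrix_matrix_mult_def sum_distrib_right)
  also have "\<dots> = (\<Sum>i\<in>UNIV. \<Sum>k\<in>UNIV. \<Sum>j\<in>UNIV. X$i$k * A$k$j * Y$i$j)"
    by (rule sum.cong[OF refl], rule sum.swap)
  also have "\<dots> = X \<bullet> (Y ** transpose A)"
    by (simp add: inner_vec_def matrix_matrix_mult_def transpose_def sum_distrib_left mult_ac)
  finally show ?thesis .
qed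

lemma tr_add: "transpose ((X::real^'n^'n) + Y) = transpose X + transpose Y"
  by (simp add: transpose_def vec_eq_iff)
lemma tr_diff: "transpose ((X::real^'n^'n) - Y) = transpose X - transpose Y"
  by (simp add: transpose_def vec_eq_iff)
lemma tr_zero: "transpose (0::real^'n^'n) = 0"
  by (simp add: transpose_def vec_eq_iff)
lemma tr_uminus: "transpose (- (X::real^'n^'n)) = - transpose X"
  by (simp add: transpose_def vec_eq_iff)
lemma tr_entry: "transpose (X::real^'n^'n) $ i $ j = X $ j $ i"
  by (simp add: transpose_def)

lemma sym_entry: "transpose (X::real^'n^'n) = X \<Longrightarrow> X $ i $ j = X $ j $ i"
  by (metis tr_entry)

lemma proj_eq_closest:
  fixes K :: "'a::euclidean_space set"
  assumes "closed K" "convex K" "K \<noteq> {}"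
  shows "proj_onto K z = closest_point K z"
  unfolding proj_onto_def
proof (rule the_equality)
  show "closest_point K z \<in> K \<and> (\<forall>Q\<in>K. dist z (closest_point K z) \<le> dist z Q)"
    using closest_point_exists[OF assms(1,3)] by auto
next
  fix P assume "P \<in> K \<and> (\<forall>Q\<in>K. dist z P \<le> dist z Q)"
  then show "P = closest_point K z"
    using closest_point_unique[OF assms(2,1)] by blast
qed

lemma proj_in:
  fixes K :: "'a::euclidean_space set"
  assumes "closed K" "convex K" "K \<noteq> {}"
  shows "proj_onto K z \<in> K"
  using proj_eq_closest[OF assms] closest_point_in_set[OF assms(1,3)] by simp

lemma proj_dot:
  fixes K :: "'a::euclidean_space set"
  assumes "closed K" "convex K" "K \<noteq> {}" "Y \<in> K"
  shows "(z - proj_onto K z) \<bullet> (Y - proj_onto K z) \<le> 0"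
  using proj_eq_closest[OF assms(1-3)] closest_point_dot[OF assms(2,1,4)] by simp

lemma proj_lip:
  fixes K :: "'a::euclidean_space set"
  assumes "closed K" "convex K" "K \<noteq> {}"
  shows "norm (proj_onto K x - proj_onto K y) \<le> norm (x - y)"
  using proj_eq_closest[OF assms] closest_point_lipschitz[OF assms(2,1,3)]
  by (simp add: dist_norm)

lemma proj_char:
  fixes K :: "'a::euclidean_space set"
  assumes "closed K" "convex K" "P \<in> K" "\<forall>Y\<in>K. (z - P) \<bullet> (Y - P) \<le> 0"
  shows "proj_onto K z = P"
proof -
  have "\<forall>Y\<in>K. dist z P \<le> dist z Y"
  proof
    fix Y assume Y: "Y \<in> K"
    have e: "z - Y = (z - P) - (Y - P)" by simp
    have "(norm (z - Y))\<^sup>2 = (norm (z - P))\<^sup>2 - 2 * ((z - P) \<bullet> (Y - P)) + (norm (Y - P))\<^sup>2"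
      unfolding e by (simp add: power2_norm_eq_inner inner_diff_left inner_diff_right inner_commute)
    moreover have "(z - P) \<bullet> (Y - P) \<le> 0" using assms(4) Y by blast
    moreover have "0 \<le> (norm (Y - P))\<^sup>2" by (rule zero_le_power2)
    ultimately have sq: "(norm (z - P))\<^sup>2 \<le> (norm (z - Y))\<^sup>2" by linarith
    show "dist z P \<le> dist z Y" unfolding dist_norm
      by (rule power2_le_imp_le[OF sq norm_ge_zero])
  qed
  then have "P = closest_point K z" using closest_point_unique[OF assms(2,1,3)] by blast
  moreover have "K \<noteq> {}" using assms(3) by blast
  ultimately show ?thesis using proj_eq_closest[OF assms(1,2)] by simp
qed

definition is_cone :: "'a::euclidean_space set \<Rightarrow> bool" where
  "is_cone K \<longleftrightarrow> closed K \<and> convex K \<and> 0 \<in> K \<and> (\<forall>t x. t \<ge> 0 \<longrightarrow> x \<in> K \<longrightarrow> t *\<^sub>R x \<in> K)"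

lemma cone_ne: "is_cone K \<Longrightarrow> K \<noteq> {}"
  unfolding is_cone_def by blast

lemma cone_proj:
  assumes c: "is_cone K"
  shows "proj_onto K z \<in> K" "(z - proj_onto K z) \<bullet> proj_onto K z = 0"
        "\<And>Y. Y \<in> K \<Longrightarrow> (z - proj_onto K z) \<bullet> Y \<le> 0"
proof -
  have cl: "closed K" "convex K" "K \<noteq> {}" using c unfolding is_cone_def by auto
  let ?P = "proj_onto K z"
  show Pin: "?P \<in> K" by (rule proj_in[OF cl])
  have "(z - ?P) \<bullet> (0 - ?P) \<le> 0" using proj_dot[OF cl, of 0] c unfolding is_cone_def by blast
  moreover have "(z - ?P) \<bullet> (2 *\<^sub>R ?P - ?P) \<le> 0"
    using proj_dot[OF cl, of "2 *\<^sub>R ?P"] c Pin unfolding is_cone_def by auto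
  ultimately show eq: "(z - ?P) \<bullet> ?P = 0"
    by (simp add: inner_diff_right algebra_simps)
  fix Y assume "Y \<in> K"
  then have "(z - ?P) \<bullet> (Y - ?P) \<le> 0" using proj_dot[OF cl] by blast
  then show "(z - ?P) \<bullet> Y \<le> 0" using eq by (simp add: inner_diff_right)
qed

lemma cone_proj_char:
  assumes c: "is_cone K" and "P \<in> K" "(z - P) \<bullet> P = 0" "\<And>Y. Y \<in> K \<Longrightarrow> (z - P) \<bullet> Y \<le> 0"
  shows "proj_onto K z = P"
  using c assms(2-4) by (intro proj_char) (auto simp: is_cone_def inner_diff_right)

lemma cone_proj_homog:
  assumes c: "is_cone K" and t: "t \<ge> 0"
  shows "proj_onto K (t *\<^sub>R z) = t *\<^sub>R proj_onto K z"
proof (rule cone_proj_char[OF c])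
  let ?P = "proj_onto K z"
  show "t *\<^sub>R ?P \<in> K" using c t cone_proj(1)[OF c] unfolding is_cone_def by blast
  have "(t *\<^sub>R z - t *\<^sub>R ?P) \<bullet> (t *\<^sub>R ?P) = t * t * ((z - ?P) \<bullet> ?P)"
    by (simp add: inner_diff_left right_diff_distrib)
  then show "(t *\<^sub>R z - t *\<^sub>R ?P) \<bullet> (t *\<^sub>R ?P) = 0" using cone_proj(2)[OF c] by simp
  fix Y assume "Y \<in> K"
  then have "(z - ?P) \<bullet> Y \<le> 0" by (rule cone_proj(3)[OF c])
  then have le: "t * ((z - ?P) \<bullet> Y) \<le> 0" using t by (simp add: mult_nonneg_nonpos)
  have e: "(t *\<^sub>R z - t *\<^sub>R ?P) \<bullet> Y = t * ((z - ?P) \<bullet> Y)"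
    by (simp add: inner_diff_left right_diff_distrib)
  show "(t *\<^sub>R z - t *\<^sub>R ?P) \<bullet> Y \<le> 0" unfolding e by (rule le)
qed

lemma cone_proj_zero: assumes "is_cone K" shows "proj_onto K 0 = 0"
proof (rule cone_proj_char[OF assms])
  show "0 \<in> K" using assms unfolding is_cone_def by blast
qed simp_all

definition qf :: "real^'n^'n \<Rightarrow> real^'n \<Rightarrow> real" where
  "qf N x = (\<Sum>i\<in>UNIV. \<Sum>j\<in>UNIV. x$i * N$i$j * x$j)"
definition bil :: "real^'n^'n \<Rightarrow> real^'n \<Rightarrow> real^'n \<Rightarrow> real" where
  "bil N x y = (\<Sum>i\<in>UNIV. \<Sum>j\<in>UNIV. x$i * N$i$j * y$j)"

lemma qf_bil: "qf N x = bil N x x" by (simp add: qf_def bil_def)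

lemma inner_mv_qf: "x \<bullet> ((N::real^'n^'n) *v x) = qf N x"
  by (simp add: qf_def inner_vec_def matrix_vector_mult_def sum_distrib_left mult_ac)

lemma psd_iff: "psd (N::real^'n^'n) \<longleftrightarrow> transpose N = N \<and> (\<forall>x. 0 \<le> qf N x)"
  by (simp add: psd_def inner_mv_qf)

lemma bil_sym: assumes "transpose (N::real^'n^'n) = N" shows "bil N x y = bil N y x"
proof -
  have "bil N x y = (\<Sum>j\<in>UNIV. \<Sum>i\<in>UNIV. x$i * N$i$j * y$j)" unfolding bil_def by (rule sum.swap)
  also have "\<dots> = bil N y x" unfolding bil_def
    using sym_entry[OF assms] by (simp add: mult_ac)
  finally show ?thesis .
qed

lemma bil_comb: "bil N (s *\<^sub>R x + t *\<^sub>R y) (s *\<^sub>R x + t *\<^sub>R y)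
   = s\<^sup>2 * bil N x x + s * t * (bil N x y + bil N y x) + t\<^sup>2 * bil N y y"
  by (simp add: bil_def sum.distrib sum_distrib_left algebra_simps power2_eq_square)

lemma qf_comb: assumes "transpose (N::real^'n^'n) = N"
  shows "qf N (s *\<^sub>R x + t *\<^sub>R y) = s\<^sup>2 * qf N x + 2 * s * t * bil N x y + t\<^sup>2 * qf N y"
  unfolding qf_bil bil_comb bil_sym[OF assms, of y x] by simp

lemma bil_axis_right: fixes N :: "real^'n^'n" shows "bil N x (axis a 1) = (\<Sum>i\<in>UNIV. x$i * N$i$a)"
proof -
  have "\<And>i. (\<Sum>j\<in>UNIV. x$i * N$i$j * (axis a 1 :: real^'n)$j) = x$i * N$i$a"
    by (simp add: axis_def if_distrib if_distribR sum.delta cong: if_cong)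
  then show ?thesis by (simp add: bil_def)
qed

lemma bil_axis2: fixes N :: "real^'n^'n" shows "bil N (axis a 1) (axis b 1) = N$a$b"
proof -
  have e: "\<And>i. (axis a 1 :: real^'n)$i * N$i$b = (if i = a then N$a$b else 0)"
    by (simp add: axis_def)
  show ?thesis unfolding bil_axis_right e by simp
qed

lemma quad_disc:
  fixes a b c :: real
  assumes "\<And>s t. 0 \<le> a * s\<^sup>2 + 2 * b * s * t + c * t\<^sup>2"
  shows "b\<^sup>2 \<le> a * c"
proof -
  have a: "0 \<le> a" using assms[of 1 0] by simp
  have c: "0 \<le> c" using assms[of 0 1] by simp
  show ?thesis
  proof (cases "c = 0")
    case True
    have "b = 0"
    proof (rule ccontr)
      assume b: "b \<noteq> 0"
      have "0 \<le> a * 1\<^sup>2 + 2 * b * 1 * (-(a+1)/(2*b)) + c * (-(a+1)/(2*b))\<^sup>2"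
        by (rule assms)
      also have "\<dots> = -1" using b True by (simp add: field_simps)
      finally show False by simp
    qed
    then show ?thesis using True by simp
  next
    case False
    then have cp: "c > 0" using c by simp
    have "0 \<le> a * c\<^sup>2 + 2 * b * c * (-b) + c * (-b)\<^sup>2" by (rule assms)
    also have "\<dots> = c * (a * c - b\<^sup>2)" by (simp add: algebra_simps power2_eq_square)
    finally have "0 \<le> a * c - b\<^sup>2" using cp by (simp add: zero_le_mult_iff)
    then show ?thesis by simp
  qed
qed

lemma psd_diag: "psd (N::real^'n^'n) \<Longrightarrow> 0 \<le> N$i$i"
  using psd_iff[of N] qf_bil[of N "axis i 1"] bil_axis2[of N i i] by metis

lemma psd_minor: assumes "psd (N::real^'n^'n)" shows "(N$i$j)\<^sup>2 \<le> N$i$i * N$j$j"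
proof (rule quad_disc)
  fix s t
  have s: "transpose N = N" and q: "\<And>x. 0 \<le> qf N x" using assms psd_iff by auto
  have "qf N (s *\<^sub>R axis i 1 + t *\<^sub>R axis j 1) = N$i$i * s\<^sup>2 + 2 * N$i$j * s * t + N$j$j * t\<^sup>2"
    unfolding qf_comb[OF s] by (simp add: qf_bil bil_axis2 mult_ac)
  then show "0 \<le> N$i$i * s\<^sup>2 + 2 * N$i$j * s * t + N$j$j * t\<^sup>2" using q by metis
qed

lemma psd_entry_bound: assumes "psd (N::real^'n^'n)" shows "\<bar>N$i$j\<bar> \<le> sqrt (N$i$i * N$j$j)"
  using psd_minor[OF assms, of i j] real_sqrt_abs real_sqrt_le_mono by metis

definition supp_in :: "'n set \<Rightarrow> real^'n^'n \<Rightarrow> bool" where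
  "supp_in S N \<longleftrightarrow> (\<forall>i j. N$i$j \<noteq> 0 \<longrightarrow> i \<in> S \<and> j \<in> S)"

lemma qf_diff: "qf ((N::real^'n^'n) - R) x = qf N x - qf R x"
  by (simp add: qf_def sum_subtractf algebra_simps)

lemma inner_qf_rank1: "(P::real^'n^'n) \<bullet> (\<chi> i j. c$i * c$j / d) = qf P c / d"
  by (simp add: inner_mat qf_def sum_divide_distrib mult_ac)

lemma qf_rank1: "qf ((\<chi> i j. c$i * c$j / d)::real^'n^'n) x = (\<Sum>i\<in>UNIV. c$i * x$i)\<^sup>2 / d"
  by (simp add: qf_def power2_eq_square sum_product sum_divide_distrib mult_ac)

lemma psd_selfdual_aux:
  assumes P: "psd (P::real^'n^'n)" and fin: "finite S"
  shows "\<forall>N. psd N \<and> supp_in S N \<longrightarrow> 0 \<le> P \<bullet> N"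
  using fin
proof (induction S rule: finite_induct)
  case empty
  show ?case
  proof (intro allI impI)
    fix N :: "real^'n^'n" assume "psd N \<and> supp_in {} N"
    then have "N = 0" by (auto simp: supp_in_def vec_eq_iff)
    then show "0 \<le> P \<bullet> N" by simp
  qed
next
  case (insert a S)
  show ?case
  proof (intro allI impI)
    fix N :: "real^'n^'n" assume H: "psd N \<and> supp_in (insert a S) N"
    then have Np: "psd N" and Ns: "supp_in (insert a S) N" by auto
    have symN: "transpose N = N" using Np psd_iff by auto
    show "0 \<le> P \<bullet> N"
    proof (cases "N$a$a = 0")
      case True
      have z: "N$i$a = 0" for i
        using psd_minor[OF Np, of i a] True psd_diag[OF Np, of i] by simp
      have "supp_in S N" unfolding supp_in_def
      proof (intro allI impI)
        fix i j assume nz: "N$i$j \<noteq> 0"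
        then have "i \<noteq> a" using z sym_entry[OF symN, of a j] by auto
        moreover have "j \<noteq> a" using z nz by auto
        ultimately show "i \<in> S \<and> j \<in> S" using Ns nz unfolding supp_in_def by blast
      qed
      then show ?thesis using insert.IH Np by blast
    next
      case False
      have dpos: "N$a$a > 0" using False psd_diag[OF Np, of a] by simp
      define c :: "real^'n" where "c = (\<chi> i. N$i$a)"
      define R :: "real^'n^'n" where "R = (\<chi> i j. c$i * c$j / N$a$a)"
      define N' where "N' = N - R"
      have cz: "i \<notin> insert a S \<Longrightarrow> c$i = 0" for i using Ns unfolding supp_in_def c_def by auto
      have "supp_in S N'" unfolding supp_in_def
      proof (intro allI impI)
        fix i j assume nz: "N'$i$j \<noteq> 0"
        have "i \<noteq> a" using nz dpos sym_entry[OF symN, of j a]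
          by (auto simp: N'_def R_def c_def)
        moreover have "j \<noteq> a" using nz dpos sym_entry[OF symN, of j a]
          by (auto simp: N'_def R_def c_def)
        moreover have "i \<in> insert a S"
        proof (rule ccontr)
          assume ni: "i \<notin> insert a S"
          then have "N$i$j = 0" using Ns unfolding supp_in_def by blast
          then show False using nz cz[OF ni] by (simp add: N'_def R_def)
        qed
        moreover have "j \<in> insert a S"
        proof (rule ccontr)
          assume ni: "j \<notin> insert a S"
          then have "N$i$j = 0" using Ns unfolding supp_in_def by blast
          then show False using nz cz[OF ni] by (simp add: N'_def R_def)
        qed
        ultimately show "i \<in> S \<and> j \<in> S" by auto
      qed
      moreover have "psd N'"
        unfolding psd_iff
      proof
        show "transpose N' = N'"
          using symN by (simp add: N'_def R_def vec_eq_iff tr_entry tr_diff mult.commute)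
        show "\<forall>x. 0 \<le> qf N' x"
        proof
          fix x :: "real^'n"
          have q: "\<And>x. 0 \<le> qf N x" using Np psd_iff by auto
          have "(bil N x (axis a 1))\<^sup>2 \<le> qf N x * N$a$a"
          proof (rule quad_disc)
            fix s t
            have "qf N (s *\<^sub>R x + t *\<^sub>R axis a 1) = qf N x * s\<^sup>2 + 2 * bil N x (axis a 1) * s * t + N$a$a * t\<^sup>2"
              unfolding qf_comb[OF symN] by (simp add: qf_bil bil_axis2 mult_ac)
            then show "0 \<le> qf N x * s\<^sup>2 + 2 * bil N x (axis a 1) * s * t + N$a$a * t\<^sup>2"
              using q by metis
          qed
          moreover have "bil N x (axis a 1) = (\<Sum>i\<in>UNIV. c$i * x$i)"
            unfolding bil_axis_right c_def by (simp add: mult.commute)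
          ultimately have "(\<Sum>i\<in>UNIV. c$i * x$i)\<^sup>2 / N$a$a \<le> qf N x"
            using dpos by (simp add: divide_le_eq mult.commute)
          then show "0 \<le> qf N' x"
            unfolding N'_def qf_diff R_def qf_rank1 by simp
        qed
      qed
      ultimately have "0 \<le> P \<bullet> N'" using insert.IH by blast
      moreover have "0 \<le> P \<bullet> R"
        unfolding R_def inner_qf_rank1 using P dpos psd_iff[of P] by (simp add: divide_nonneg_pos)
      moreover have "P \<bullet> N = P \<bullet> N' + P \<bullet> R" unfolding N'_def by (simp add: inner_diff_right)
      ultimately show ?thesis by simp
    qed
  qed
qed

lemma psd_selfdual: "psd (P::real^'n^'n) \<Longrightarrow> psd N \<Longrightarrow> 0 \<le> P \<bullet> N"
  using psd_selfdual_aux[of P UNIV] by (auto simp: supp_in_def)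

lemma rank1_psd: "psd ((\<chi> i j. c$i * c$j)::real^'n^'n)"
proof -
  have "qf ((\<chi> i j. c$i * c$j)::real^'n^'n) x = (\<Sum>i\<in>UNIV. c$i * x$i)\<^sup>2" for x
    using qf_rank1[of c 1 x] by simp
  then show ?thesis unfolding psd_iff by (simp add: vec_eq_iff tr_entry mult.commute)
qed

lemma dual_psd:
  assumes "transpose (N::real^'n^'n) = N" "\<And>Y. psd Y \<Longrightarrow> 0 \<le> N \<bullet> Y"
  shows "psd N"
  unfolding psd_iff
proof (intro conjI allI)
  show "transpose N = N" by fact
  fix x :: "real^'n"
  have "0 \<le> N \<bullet> (\<chi> i j. x$i * x$j / 1)" using assms(2)[OF rank1_psd[of x]] by simp
  then show "0 \<le> qf N x" unfolding inner_qf_rank1 by simp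
qed

lemma qf_add: "qf ((X::real^'n^'n) + Y) x = qf X x + qf Y x"
  by (simp add: qf_def sum.distrib algebra_simps)
lemma qf_scale: "qf (c *\<^sub>R (X::real^'n^'n)) x = c * qf X x"
  by (simp add: qf_def sum_distrib_left algebra_simps)
lemma qf_zero: "qf (0::real^'n^'n) x = 0"
  by (simp add: qf_def)

lemma psd_add: "psd X \<Longrightarrow> psd Y \<Longrightarrow> psd ((X::real^'n^'n) + Y)"
  by (simp add: psd_iff qf_add tr_add)
lemma psd_scale: "psd X \<Longrightarrow> c \<ge> 0 \<Longrightarrow> psd (c *\<^sub>R (X::real^'n^'n))"
  by (simp add: psd_iff qf_scale transpose_scalar)
lemma psd_zero: "psd (0::real^'n^'n)"
  by (simp add: psd_iff qf_zero tr_zero)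

definition KP :: "(real^'n^'n) set" where "KP = {N. psd N}"
definition Kb :: "'n set \<Rightarrow> (real^'n^'n) set" where "Kb \<beta> = {N. psd N \<and> supp_in \<beta> N}"
definition mask :: "'n set \<Rightarrow> real^'n^'n \<Rightarrow> real^'n^'n" where
  "mask \<beta> M = (\<chi> i j. if i \<in> \<beta> \<and> j \<in> \<beta> then M$i$j else 0)"

lemma projPSD_KP: "projPSD M = proj_onto KP M"
  by (simp add: projPSD_def KP_def)
lemma projPSD_block_Kb: "projPSD_block \<beta> M = proj_onto (Kb \<beta>) (mask \<beta> M)"
  by (simp add: projPSD_block_def Kb_def mask_def supp_in_def)

lemma closed_psd: "closed {N::real^'n^'n. psd N}"
proof -
  have "{N::real^'n^'n. psd N} = {N. \<forall>i j. N$i$j = N$j$i} \<inter> {N. \<forall>x. 0 \<le> qf N x}"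
    unfolding psd_iff by (auto simp: vec_eq_iff tr_entry)
  moreover have "closed {N::real^'n^'n. \<forall>i j. N$i$j = N$j$i}"
    by (intro closed_Collect_all closed_Collect_eq continuous_intros)
  moreover have "closed {N::real^'n^'n. \<forall>x. 0 \<le> qf N x}"
    unfolding qf_def by (intro closed_Collect_all closed_Collect_le continuous_intros)
  ultimately show ?thesis by auto
qed

lemma closed_supp: "closed {N::real^'n^'n. supp_in \<beta> N}"
proof -
  have "{N::real^'n^'n. supp_in \<beta> N} = {N. \<forall>i j. N$i$j = (if i \<in> \<beta> \<and> j \<in> \<beta> then N$i$j else 0)}"
    unfolding supp_in_def by auto
  moreover have "closed {N::real^'n^'n. \<forall>i j. N$i$j = (if i \<in> \<beta> \<and> j \<in> \<beta> then N$i$j else 0)}"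
  proof (intro closed_Collect_all)
    fix i j
    show "closed {N::real^'n^'n. N$i$j = (if i \<in> \<beta> \<and> j \<in> \<beta> then N$i$j else 0)}"
      by (cases "i \<in> \<beta> \<and> j \<in> \<beta>") (auto intro!: closed_Collect_eq continuous_intros)
  qed
  ultimately show ?thesis by simp
qed

lemma cone_KP: "is_cone (KP::(real^'n^'n) set)"
  unfolding is_cone_def KP_def
proof (intro conjI allI impI)
  show "closed {N::real^'n^'n. psd N}" by (rule closed_psd)
  show "convex {N::real^'n^'n. psd N}" unfolding convex_def
    by (auto intro!: psd_add psd_scale)
qed (auto intro: psd_zero psd_scale)

lemma cone_Kb: "is_cone (Kb \<beta> :: (real^'n^'n) set)"
  unfolding is_cone_def
proof (intro conjI allI impI)
  have "Kb \<beta> = {N::real^'n^'n. psd N} \<inter> {N. supp_in \<beta> N}" unfolding Kb_def by auto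
  then show "closed (Kb \<beta> :: (real^'n^'n) set)" using closed_psd closed_supp by (metis closed_Int)
  show "convex (Kb \<beta> :: (real^'n^'n) set)" unfolding convex_def Kb_def
    by (auto intro!: psd_add psd_scale simp: supp_in_def) (metis mult_zero_right add.right_neutral)+
  show "(0::real^'n^'n) \<in> Kb \<beta>" unfolding Kb_def by (simp add: psd_zero supp_in_def)
  fix t :: real and x :: "real^'n^'n"
  assume "0 \<le> t" "x \<in> Kb \<beta>"
  then show "t *\<^sub>R x \<in> Kb \<beta>" unfolding Kb_def by (auto intro: psd_scale simp: supp_in_def)
qed

lemma mm_add_l: "(A::real^'n^'n) ** (B + C) = A ** B + A ** C"
  by (simp add: matrix_matrix_mult_def vec_eq_iff sum.distrib algebra_simps)
lemma mm_add_r: "((B::real^'n^'n) + C) ** A = B ** A + C ** A"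
  by (simp add: matrix_matrix_mult_def vec_eq_iff sum.distrib algebra_simps)
lemma mm_diff_l: "(A::real^'n^'n) ** (B - C) = A ** B - A ** C"
  by (simp add: matrix_matrix_mult_def vec_eq_iff sum_subtractf algebra_simps)
lemma mm_diff_r: "((B::real^'n^'n) - C) ** A = B ** A - C ** A"
  by (simp add: matrix_matrix_mult_def vec_eq_iff sum_subtractf algebra_simps)
lemma mm_scale_l: "(A::real^'n^'n) ** (c *\<^sub>R B) = c *\<^sub>R (A ** B)"
  by (simp add: matrix_matrix_mult_def vec_eq_iff sum_distrib_left algebra_simps)
lemma mm_scale_r: "(c *\<^sub>R B::real^'n^'n) ** A = c *\<^sub>R (B ** A)"
  by (simp add: matrix_matrix_mult_def vec_eq_iff sum_distrib_left algebra_simps)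
lemma mm_zero_l: "(0::real^'n^'n) ** A = 0" by simp
lemma mm_zero_r: "(A::real^'n^'n) ** 0 = 0" by simp

lemma inner_transpose: "transpose (A::real^'n^'n) \<bullet> transpose B = A \<bullet> B"
proof -
  have "transpose A \<bullet> transpose B = (\<Sum>i\<in>UNIV. \<Sum>j\<in>UNIV. A$j$i * B$j$i)"
    by (simp add: inner_mat tr_entry)
  also have "\<dots> = A \<bullet> B" unfolding inner_mat by (rule sum.swap)
  finally show ?thesis .
qed

lemma inner_mv_transpose: "x \<bullet> ((A::real^'n^'n) *v w) = (transpose A *v x) \<bullet> w"
  by (simp add: dot_lmul_matrix)

lemma psd_congr: fixes A :: "real^'n^'n" assumes "psd (X::real^'n^'n)" shows "psd (A ** X ** transpose A)"
  unfolding psd_def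
proof (intro conjI allI)
  have "transpose X = X" using assms psd_def by auto
  then show "transpose (A ** X ** transpose A) = A ** X ** transpose A"
    by (simp add: matrix_transpose_mul matrix_mul_assoc)
  fix x :: "real^'n"
  have "x \<bullet> ((A ** X ** transpose A) *v x) = (transpose A *v x) \<bullet> (X *v (transpose A *v x))"
    by (simp only: matrix_vector_mul_assoc[symmetric] inner_mv_transpose)
  also have "\<dots> \<ge> 0" using assms psd_def by auto
  finally show "0 \<le> x \<bullet> ((A ** X ** transpose A) *v x)" .
qed

lemma real_lin_quad: fixes g h :: real
  assumes "h \<ge> 0" "\<And>t. 0 \<le> t * g + t\<^sup>2 * h" shows "g = 0"
proof (rule ccontr)
  assume g: "g \<noteq> 0"
  let ?t = "- g / (2 * (h + 1))"
  have hp: "h + 1 > 0" using assms by simp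
  have "?t * g + ?t\<^sup>2 * h = g\<^sup>2 * (h - 2 * (h + 1)) / (4 * (h + 1)\<^sup>2)"
    using hp by (simp add: power2_eq_square divide_simps) (simp add: algebra_simps)
  also have "\<dots> < 0"
  proof -
    have "g\<^sup>2 > 0" using g by simp
    moreover have "h - 2 * (h + 1) < 0" using assms by simp
    ultimately have "g\<^sup>2 * (h - 2 * (h + 1)) < 0" by (simp add: mult_pos_neg)
    moreover have "4 * (h + 1)\<^sup>2 > 0" using hp by simp
    ultimately show ?thesis by (simp add: divide_neg_pos)
  qed
  finally show False using assms(2)[of ?t] by simp
qed

lemma projKP_props:
  assumes symZ: "transpose (Z::real^'n^'n) = Z"
  defines "P \<equiv> proj_onto KP Z"
  defines "N \<equiv> P - Z"
  shows "psd P" "psd N" "P \<bullet> N = 0" "N ** P = 0" "P ** N = 0"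
proof -
  have Pin: "P \<in> KP" unfolding P_def by (rule cone_proj(1)[OF cone_KP])
  then show pP: "psd P" by (simp add: KP_def)
  have symP: "transpose P = P" using pP psd_def by auto
  have symN: "transpose N = N" unfolding N_def using symP symZ by (simp add: tr_diff)
  have dual: "\<And>Y. psd Y \<Longrightarrow> 0 \<le> N \<bullet> Y"
  proof -
    fix Y :: "real^'n^'n" assume "psd Y"
    then have "(Z - P) \<bullet> Y \<le> 0" unfolding P_def using cone_proj(3)[OF cone_KP] by (simp add: KP_def)
    moreover have "Z - P = - N" unfolding N_def by simp
    ultimately show "0 \<le> N \<bullet> Y" by simp
  qed
  show pN: "psd N" by (rule dual_psd[OF symN dual])
  have "(Z - P) \<bullet> P = 0" unfolding P_def by (rule cone_proj(2)[OF cone_KP])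
  moreover have "Z - P = - N" unfolding N_def by simp
  ultimately show PN0: "P \<bullet> N = 0" by (simp add: inner_commute)
  define E where "E = N ** P"
  let ?g = "N \<bullet> (E ** P) + N \<bullet> (P ** transpose E)"
  let ?h = "N \<bullet> (E ** P ** transpose E)"
  have h0: "?h \<ge> 0" using dual[OF psd_congr[OF pP, of E]] .
  have quad: "0 \<le> t * ?g + t\<^sup>2 * ?h" for t
  proof -
    let ?A = "mat 1 + t *\<^sub>R E"
    have "?A ** P ** transpose ?A = P + t *\<^sub>R (E ** P + P ** transpose E) + t\<^sup>2 *\<^sub>R (E ** P ** transpose E)"
      by (simp add: tr_add transpose_scalar mm_add_l mm_add_r mm_scale_l mm_scale_r
          scaleR_add_right power2_eq_square algebra_simps)
    then have "N \<bullet> (?A ** P ** transpose ?A) = N \<bullet> P + t * ?g + t\<^sup>2 * ?h"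
      by (simp add: inner_add_right)
    moreover have "0 \<le> N \<bullet> (?A ** P ** transpose ?A)" by (rule dual[OF psd_congr[OF pP]])
    moreover have "N \<bullet> P = 0" using PN0 by (simp add: inner_commute)
    ultimately show ?thesis by simp
  qed
  have "?g = 0" by (rule real_lin_quad[OF h0 quad])
  moreover have "N \<bullet> (E ** P) = E \<bullet> (N ** P)"
  proof -
    have "N \<bullet> (E ** P) = (E ** P) \<bullet> N" by (rule inner_commute)
    also have "\<dots> = E \<bullet> (N ** transpose P)" by (rule inner_mult_right)
    finally show ?thesis using symP by simp
  qed
  moreover have "N \<bullet> (P ** transpose E) = E \<bullet> (N ** P)"
  proof -
    have "N \<bullet> (P ** transpose E) = (P ** transpose E) \<bullet> N" by (rule inner_commute)
    also have "\<dots> = transpose E \<bullet> (transpose P ** N)" by (rule inner_mult_left)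
    also have "\<dots> = transpose E \<bullet> transpose (N ** P)"
      by (simp add: matrix_transpose_mul symP symN)
    also have "\<dots> = E \<bullet> (N ** P)" by (rule inner_transpose)
    finally show ?thesis .
  qed
  ultimately have "E \<bullet> E = 0" unfolding E_def by simp
  then show NP: "N ** P = 0" unfolding E_def by simp
  have "P ** N = transpose (N ** P)" by (simp add: matrix_transpose_mul symP symN)
  then show "P ** N = 0" using NP by (simp add: tr_zero)
qed

lemma orthD: assumes "orthogonal_matrix (Q::real^'n^'n)"
  shows "transpose Q ** Q = mat 1" "Q ** transpose Q = mat 1"
  using assms unfolding orthogonal_matrix_def by auto

lemma conj_inner: "((Q::real^'n^'n) ** X ** transpose Q) \<bullet> W = X \<bullet> hatm Q W"
proof -
  have "(Q ** X ** transpose Q) \<bullet> W = (Q ** X) \<bullet> (W ** transpose (transpose Q))"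
    by (rule inner_mult_right)
  also have "\<dots> = X \<bullet> (transpose Q ** (W ** Q))" by (simp add: inner_mult_left)
  finally show ?thesis by (simp add: hatm_def matrix_mul_assoc)
qed

lemma hat_conj: assumes "orthogonal_matrix (Q::real^'n^'n)"
  shows "hatm Q (Q ** X ** transpose Q) = X"
proof -
  have "hatm Q (Q ** X ** transpose Q) = (transpose Q ** Q) ** X ** (transpose Q ** Q)"
    by (simp add: hatm_def matrix_mul_assoc)
  then show ?thesis using orthD[OF assms] by simp
qed

lemma conj_hat: assumes "orthogonal_matrix (Q::real^'n^'n)"
  shows "Q ** hatm Q H ** transpose Q = H"
proof -
  have "Q ** hatm Q H ** transpose Q = (Q ** transpose Q) ** H ** (Q ** transpose Q)"
    by (simp add: hatm_def matrix_mul_assoc)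
  then show ?thesis using orthD[OF assms] by simp
qed

lemma conj_inner2: assumes "orthogonal_matrix (Q::real^'n^'n)"
  shows "(Q ** X ** transpose Q) \<bullet> (Q ** Y ** transpose Q) = X \<bullet> Y"
  by (simp add: conj_inner hat_conj[OF assms])

lemma norm_conj: assumes "orthogonal_matrix (Q::real^'n^'n)"
  shows "norm (Q ** X ** transpose Q) = norm X"
  by (simp add: norm_eq_sqrt_inner conj_inner2[OF assms])

lemma norm_hat: assumes "orthogonal_matrix (Q::real^'n^'n)"
  shows "norm (hatm Q H) = norm H"
  using norm_conj[OF assms, of "hatm Q H"] conj_hat[OF assms] by simp

lemma hat_diff: "hatm Q ((X::real^'n^'n) - Y) = hatm Q X - hatm Q Y"
  by (simp add: hatm_def mm_diff_l mm_diff_r)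
lemma hat_add: "hatm Q ((X::real^'n^'n) + Y) = hatm Q X + hatm Q Y"
  by (simp add: hatm_def mm_add_l mm_add_r)
lemma conj_diff: "(Q::real^'n^'n) ** (X - Y) ** transpose Q = Q ** X ** transpose Q - Q ** Y ** transpose Q"
  by (simp add: mm_diff_l mm_diff_r)
lemma conj_add: "(Q::real^'n^'n) ** (X + Y) ** transpose Q = Q ** X ** transpose Q + Q ** Y ** transpose Q"
  by (simp add: mm_add_l mm_add_r)

lemma hat_sym: "transpose (H::real^'n^'n) = H \<Longrightarrow> transpose (hatm Q H) = hatm Q H"
  by (simp add: hatm_def matrix_transpose_mul matrix_mul_assoc)
lemma conj_sym: "transpose (H::real^'n^'n) = H \<Longrightarrow> transpose (Q ** H ** transpose Q) = Q ** H ** transpose Q"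
  by (simp add: matrix_transpose_mul matrix_mul_assoc)

lemma psd_hat: "psd (Y::real^'n^'n) \<Longrightarrow> psd (hatm (Q::real^'n^'n) Y)"
  using psd_congr[of Y "transpose Q"] by (simp add: hatm_def)

lemma proj_conj: assumes orth: "orthogonal_matrix (Q::real^'n^'n)"
  shows "proj_onto KP (Q ** X ** transpose Q) = Q ** proj_onto KP X ** transpose Q"
proof (rule cone_proj_char[OF cone_KP])
  let ?P = "proj_onto KP X"
  have pP: "psd ?P" using cone_proj(1)[OF cone_KP] by (simp add: KP_def)
  show "Q ** ?P ** transpose Q \<in> KP" using psd_congr[OF pP] by (simp add: KP_def)
  have "(Q ** X ** transpose Q - Q ** ?P ** transpose Q) \<bullet> (Q ** ?P ** transpose Q) = (X - ?P) \<bullet> ?P"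
    by (simp add: conj_diff[symmetric] conj_inner2[OF orth])
  then show "(Q ** X ** transpose Q - Q ** ?P ** transpose Q) \<bullet> (Q ** ?P ** transpose Q) = 0"
    using cone_proj(2)[OF cone_KP] by simp
  fix Y :: "real^'n^'n" assume "Y \<in> KP"
  then have "hatm Q Y \<in> KP" by (simp add: KP_def psd_hat)
  then have "(X - ?P) \<bullet> hatm Q Y \<le> 0" by (rule cone_proj(3)[OF cone_KP])
  then show "(Q ** X ** transpose Q - Q ** ?P ** transpose Q) \<bullet> Y \<le> 0"
    by (simp add: conj_diff[symmetric] conj_inner)
qed

lemma qf_diagm: "qf (diagm d :: real^'n^'n) x = (\<Sum>i\<in>UNIV. d i * (x$i)\<^sup>2)"
proof -
  have "\<And>i. (\<Sum>j\<in>UNIV. x$i * (diagm d :: real^'n^'n)$i$j * x$j) = d i * (x$i)\<^sup>2"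
    by (simp add: diagm_def if_distrib if_distribR power2_eq_square mult_ac cong: if_cong)
  then show ?thesis by (simp add: qf_def)
qed

lemma inner_diagm: "(diagm d :: real^'n^'n) \<bullet> Y = (\<Sum>i\<in>UNIV. d i * Y$i$i)"
proof -
  have "\<And>i. (\<Sum>j\<in>UNIV. (diagm d :: real^'n^'n)$i$j * Y$i$j) = d i * Y$i$i"
    by (simp add: diagm_def if_distrib if_distribR cong: if_cong)
  then show ?thesis by (simp add: inner_mat)
qed

lemma diagm_diff: "diagm d - diagm e = (diagm (\<lambda>i. d i - e i) :: real^'n^'n)"
  by (simp add: diagm_def vec_eq_iff)

lemma diagm_entry: "(diagm d :: real^'n^'n)$i$j = (if i = j then d i else 0)"
  by (simp add: diagm_def)

lemma psd_diagm: "(\<And>i. d i \<ge> 0) \<Longrightarrow> psd (diagm d :: real^'n^'n)"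
  unfolding psd_iff qf_diagm
  by (auto simp: vec_eq_iff tr_entry diagm_entry intro!: sum_nonneg)

lemma proj_diag: "proj_onto KP (diagm lam :: real^'n^'n) = diagm (\<lambda>i. max (lam i) 0)"
proof (rule cone_proj_char[OF cone_KP])
  show "diagm (\<lambda>i. max (lam i) 0) \<in> (KP :: (real^'n^'n) set)"
    by (simp add: KP_def psd_diagm)
  have e: "diagm lam - diagm (\<lambda>i. max (lam i) 0) = (diagm (\<lambda>i. min (lam i) 0) :: real^'n^'n)"
    unfolding diagm_diff by (rule arg_cong[where f=diagm]) auto
  have "\<And>i. min (lam i) 0 * max (lam i) 0 = 0" by (simp add: min_def max_def)
  then show "(diagm lam - diagm (\<lambda>i. max (lam i) 0)) \<bullet> (diagm (\<lambda>i. max (lam i) 0) :: real^'n^'n) = 0"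
    unfolding e inner_diagm diagm_entry by (intro sum.neutral) (simp add: min_def max_def)
  fix Y :: "real^'n^'n" assume "Y \<in> KP"
  then have "\<And>i. 0 \<le> Y$i$i" by (simp add: KP_def psd_diag)
  then show "(diagm lam - diagm (\<lambda>i. max (lam i) 0)) \<bullet> Y \<le> 0"
    unfolding e inner_diagm by (auto intro!: sum_nonpos simp: mult_nonpos_nonneg)
qed

lemma mu_props:
  fixes lam :: "'n::finite \<Rightarrow> real"
  defines "mu \<equiv> Min (insert 1 ((\<lambda>i. \<bar>lam i\<bar>) ` {i. lam i \<noteq> 0}))"
  shows "mu > 0" "\<And>i. lam i \<noteq> 0 \<Longrightarrow> mu \<le> \<bar>lam i\<bar>"
proof -
  have fin: "finite (insert 1 ((\<lambda>i. \<bar>lam i\<bar>) ` {i. lam i \<noteq> 0}))" by simp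
  have "\<forall>x \<in> insert 1 ((\<lambda>i. \<bar>lam i\<bar>) ` {i. lam i \<noteq> 0}). x > 0" by auto
  then show "mu > 0" unfolding mu_def using Min_in[OF fin] by blast
  fix i assume "lam i \<noteq> 0"
  then show "mu \<le> \<bar>lam i\<bar>" unfolding mu_def by (intro Min_le[OF fin]) auto
qed

locale dsetup =
  fixes lam :: "'n::finite \<Rightarrow> real" and G :: "real^'n^'n"
  assumes symG: "transpose G = G"
begin

definition "h = norm G"
definition "Lp = (diagm (\<lambda>i. max (lam i) 0) :: real^'n^'n)"
definition "Lm = (diagm (\<lambda>i. - min (lam i) 0) :: real^'n^'n)"
definition "Z = diagm lam + G"
definition "P = proj_onto KP Z"
definition "N = P - Z"
definition "dP = P - Lp"
definition "dN = N - Lm"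
definition "mu = Min (insert 1 ((\<lambda>i. \<bar>lam i\<bar>) ` {i. lam i \<noteq> 0}))"
definition "cc = 4 / mu"

lemma mu_pos: "mu > 0" and mu_le: "lam i \<noteq> 0 \<Longrightarrow> mu \<le> \<bar>lam i\<bar>"
  using mu_props[of lam] unfolding mu_def by auto

lemma cc_pos: "cc > 0" using mu_pos by (simp add: cc_def)

lemma h_nonneg: "h \<ge> 0" by (simp add: h_def)

lemma diag_split: "diagm lam = Lp - Lm"
  unfolding Lp_def Lm_def diagm_diff by (rule arg_cong[where f=diagm]) auto

lemma symZ: "transpose Z = Z"
  unfolding Z_def using symG by (simp add: tr_add vec_eq_iff tr_entry diagm_entry)

lemma PN: "psd P" "psd N" "P \<bullet> N = 0" "N ** P = 0" "P ** N = 0"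
  using projKP_props[OF symZ] unfolding P_def N_def by auto

lemma symP: "transpose P = P" using PN(1) psd_def by auto
lemma symN: "transpose N = N" using PN(2) psd_def by auto

lemma dP_norm: "norm dP \<le> h"
proof -
  have "proj_onto KP (diagm lam) = Lp" unfolding Lp_def by (rule proj_diag)
  then have "norm dP = norm (proj_onto KP Z - proj_onto KP (diagm lam))"
    by (simp add: dP_def P_def)
  also have "\<dots> \<le> norm (Z - diagm lam)"
    using proj_lip cone_KP unfolding is_cone_def by blast
  also have "\<dots> = h" by (simp add: Z_def h_def)
  finally show ?thesis .
qed

lemma dN_eq: "dN = dP - G"
  unfolding dN_def dP_def N_def Z_def diag_split by simp

lemma dN_norm: "norm dN \<le> 2 * h"
proof -
  have "norm dN \<le> norm dP + norm G" unfolding dN_eq by (rule norm_triangle_ineq4)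
  then show ?thesis using dP_norm by (simp add: h_def)
qed

lemma dP_entry: "\<bar>dP$i$j\<bar> \<le> h" using entry_le_norm[of dP i j] dP_norm by simp
lemma dN_entry: "\<bar>dN$i$j\<bar> \<le> 2 * h" using entry_le_norm[of dN i j] dN_norm by simp
lemma G_entry: "\<bar>G$i$j\<bar> \<le> h" using entry_le_norm[of G i j] by (simp add: h_def)

lemma P_entry: "P$i$j = dP$i$j + (if i = j then max (lam i) 0 else 0)"
  by (simp add: dP_def Lp_def diagm_entry)
lemma N_entry: "N$i$j = dN$i$j + (if i = j then - min (lam i) 0 else 0)"
  by (simp add: dN_def Lm_def diagm_entry)

lemma key_sum: "(\<Sum>i\<in>UNIV. max (lam i) 0 * N$i$i) + (\<Sum>i\<in>UNIV. - min (lam i) 0 * P$i$i) \<le> 2 * h\<^sup>2"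
proof -
  have LpLm: "Lp \<bullet> Lm = 0"
    unfolding Lp_def Lm_def inner_diagm diagm_entry by (intro sum.neutral) (simp add: min_def max_def)
  have "P \<bullet> N = Lp \<bullet> N + P \<bullet> Lm + dP \<bullet> dN"
  proof -
    have "P = Lp + dP" "N = Lm + dN" by (simp_all add: dP_def dN_def)
    then have "P \<bullet> N = (Lp + dP) \<bullet> N" by simp
    also have "\<dots> = Lp \<bullet> N + dP \<bullet> (Lm + dN)" using \<open>N = Lm + dN\<close> by (simp add: inner_add_left)
    also have "\<dots> = Lp \<bullet> N + dP \<bullet> Lm + dP \<bullet> dN" by (simp add: inner_add_right)
    also have "dP \<bullet> Lm = P \<bullet> Lm - Lp \<bullet> Lm" by (simp add: dP_def inner_diff_left)
    finally show ?thesis using LpLm by simp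
  qed
  then have "Lp \<bullet> N + P \<bullet> Lm = - (dP \<bullet> dN)" using PN(3) by simp
  also have "\<dots> \<le> norm dP * norm dN" using Cauchy_Schwarz_ineq2[of dP dN] by (simp add: abs_le_iff)
  also have "\<dots> \<le> h * (2 * h)" using dP_norm dN_norm h_nonneg by (intro mult_mono) auto
  also have "\<dots> = 2 * h\<^sup>2" by (simp add: power2_eq_square)
  finally have "Lp \<bullet> N + P \<bullet> Lm \<le> 2 * h\<^sup>2" .
  moreover have "Lp \<bullet> N = (\<Sum>i\<in>UNIV. max (lam i) 0 * N$i$i)" unfolding Lp_def inner_diagm ..
  moreover have "P \<bullet> Lm = (\<Sum>i\<in>UNIV. - min (lam i) 0 * P$i$i)" unfolding Lm_def inner_commute[of P] inner_diagm ..
  ultimately show ?thesis by simp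
qed

lemma Ndiag_small: assumes "lam i > 0" shows "N$i$i \<le> 2 * h\<^sup>2 / mu"
proof -
  have nn1: "\<And>j. 0 \<le> max (lam j) 0 * N$j$j" using psd_diag[OF PN(2)] by simp
  have nn2: "\<And>j. 0 \<le> - min (lam j) 0 * P$j$j" using psd_diag[OF PN(1)] by (simp add: mult_nonpos_nonneg)
  have "max (lam i) 0 * N$i$i \<le> (\<Sum>j\<in>UNIV. max (lam j) 0 * N$j$j)"
    by (rule member_le_sum[OF UNIV_I]) (rule nn1, simp)
  moreover have "0 \<le> (\<Sum>j\<in>UNIV. - min (lam j) 0 * P$j$j)" by (rule sum_nonneg) (rule nn2)
  ultimately have "lam i * N$i$i \<le> 2 * h\<^sup>2" using key_sum assms by simp
  moreover have "mu * N$i$i \<le> lam i * N$i$i"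
    using mu_le[of i] assms psd_diag[OF PN(2), of i] by (intro mult_right_mono) auto
  ultimately have "mu * N$i$i \<le> 2 * h\<^sup>2" by simp
  then show ?thesis using mu_pos by (simp add: pos_le_divide_eq mult.commute)
qed

lemma Pdiag_small: assumes "lam i < 0" shows "P$i$i \<le> 2 * h\<^sup>2 / mu"
proof -
  have nn1: "\<And>j. 0 \<le> max (lam j) 0 * N$j$j" using psd_diag[OF PN(2)] by simp
  have nn2: "\<And>j. 0 \<le> - min (lam j) 0 * P$j$j" using psd_diag[OF PN(1)] by (simp add: mult_nonpos_nonneg)
  have "- min (lam i) 0 * P$i$i \<le> (\<Sum>j\<in>UNIV. - min (lam j) 0 * P$j$j)"
    by (rule member_le_sum[OF UNIV_I]) (rule nn2, simp)
  moreover have "0 \<le> (\<Sum>j\<in>UNIV. max (lam j) 0 * N$j$j)" by (rule sum_nonneg) (rule nn1)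
  ultimately have "- lam i * P$i$i \<le> 2 * h\<^sup>2" using key_sum assms by simp
  moreover have "mu * P$i$i \<le> - lam i * P$i$i"
    using mu_le[of i] assms psd_diag[OF PN(1), of i] by (intro mult_right_mono) auto
  ultimately have "mu * P$i$i \<le> 2 * h\<^sup>2" by simp
  then show ?thesis using mu_pos by (simp add: pos_le_divide_eq mult.commute)
qed

lemma Ndiag_med: assumes "lam i \<ge> 0" shows "N$i$i \<le> 2 * h"
  using N_entry[of i i] dN_entry[of i i] assms by (simp add: abs_le_iff)

lemma Pdiag_med: assumes "lam i \<le> 0" shows "P$i$i \<le> h"
  using P_entry[of i i] dP_entry[of i i] assms by (simp add: abs_le_iff)


lemma sq_bound: assumes "x\<^sup>2 \<le> cc * h ^ 3" shows "\<bar>x\<bar> \<le> sqrt cc * (h * sqrt h)"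
proof -
  have "\<bar>x\<bar> = sqrt (x\<^sup>2)" by simp
  also have "\<dots> \<le> sqrt (cc * h ^ 3)" using assms by (rule real_sqrt_le_mono)
  also have "cc * h ^ 3 = (sqrt cc * (h * sqrt h))\<^sup>2"
    using cc_pos h_nonneg by (simp add: power2_eq_square power3_eq_cube power_mult_distrib mult_ac)
  also have "sqrt \<dots> = sqrt cc * (h * sqrt h)"
    using cc_pos h_nonneg by simp
  finally show ?thesis .
qed

lemma N_small: assumes "(lam i > 0 \<and> lam j \<ge> 0) \<or> (lam i \<ge> 0 \<and> lam j > 0)"
  shows "\<bar>N$i$j\<bar> \<le> sqrt cc * (h * sqrt h)"
proof (rule sq_bound)
  have m: "(N$i$j)\<^sup>2 \<le> N$i$i * N$j$j" by (rule psd_minor[OF PN(2)])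
  have d: "0 \<le> N$i$i" "0 \<le> N$j$j" using psd_diag[OF PN(2)] by auto
  have "N$i$i * N$j$j \<le> (2 * h\<^sup>2 / mu) * (2 * h)"
    using assms
  proof
    assume a: "lam i > 0 \<and> lam j \<ge> 0"
    show ?thesis using Ndiag_small[of i] Ndiag_med[of j] a d by (intro mult_mono) auto
  next
    assume a: "lam i \<ge> 0 \<and> lam j > 0"
    have "N$i$i * N$j$j \<le> (2 * h) * (2 * h\<^sup>2 / mu)"
      using Ndiag_small[of j] Ndiag_med[of i] a d h_nonneg by (intro mult_mono) auto
    then show ?thesis by (simp add: mult.commute)
  qed
  also have "\<dots> = cc * h ^ 3" by (simp add: cc_def power2_eq_square power3_eq_cube)
  finally show "(N$i$j)\<^sup>2 \<le> cc * h ^ 3" using m by simp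
qed

lemma P_small: assumes "(lam i < 0 \<and> lam j \<le> 0) \<or> (lam i \<le> 0 \<and> lam j < 0)"
  shows "\<bar>P$i$j\<bar> \<le> sqrt cc * (h * sqrt h)"
proof (rule sq_bound)
  have m: "(P$i$j)\<^sup>2 \<le> P$i$i * P$j$j" by (rule psd_minor[OF PN(1)])
  have d: "0 \<le> P$i$i" "0 \<le> P$j$j" using psd_diag[OF PN(1)] by auto
  have "P$i$i * P$j$j \<le> (2 * h\<^sup>2 / mu) * (2 * h)"
    using assms
  proof
    assume a: "lam i < 0 \<and> lam j \<le> 0"
    show ?thesis using Pdiag_small[of i] Pdiag_med[of j] a d by (intro mult_mono) auto
  next
    assume a: "lam i \<le> 0 \<and> lam j < 0"
    have "P$i$i * P$j$j \<le> (2 * h) * (2 * h\<^sup>2 / mu)"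
      using Pdiag_small[of j] Pdiag_med[of i] a d h_nonneg by (intro mult_mono) auto
    then show ?thesis by (simp add: mult.commute)
  qed
  also have "\<dots> = cc * h ^ 3" by (simp add: cc_def power2_eq_square power3_eq_cube)
  finally show "(P$i$j)\<^sup>2 \<le> cc * h ^ 3" using m by simp
qed

end

lemma sum_prod_bound:
  fixes a b :: "'n::finite \<Rightarrow> real"
  assumes "\<And>k. \<bar>a k\<bar> \<le> A" "\<And>k. \<bar>b k\<bar> \<le> B"
  shows "\<bar>\<Sum>k\<in>UNIV. a k * b k\<bar> \<le> real CARD('n) * (A * B)"
proof -
  have "\<bar>\<Sum>k\<in>UNIV. a k * b k\<bar> \<le> (\<Sum>k\<in>UNIV. \<bar>a k * b k\<bar>)" by (rule sum_abs)
  also have "\<dots> \<le> (\<Sum>k\<in>(UNIV::'n set). A * B)"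
  proof (rule sum_mono)
    fix k :: 'n
    have "0 \<le> A" using assms(1)[of k] by simp
    then show "\<bar>a k * b k\<bar> \<le> A * B" unfolding abs_mult
      using assms by (intro mult_mono) auto
  qed
  also have "\<dots> = real CARD('n) * (A * B)" by simp
  finally show ?thesis .
qed

context dsetup begin

lemma comm_PZ: "P ** Z = Z ** P"
proof -
  have "Z = P - N" by (simp add: N_def)
  then have "P ** Z = P ** P - P ** N" "Z ** P = P ** P - N ** P" by (simp_all add: mm_diff_l mm_diff_r)
  then show ?thesis using PN(4,5) by simp
qed

lemma caseC: assumes li: "lam i < 0" and lj: "lam j > 0"
  shows "\<bar>P$i$j - lam j / (lam j - lam i) * G$i$j\<bar> \<le> 2 * real CARD('n) * h\<^sup>2 / mu"
proof -
  have ij: "i \<noteq> j" using li lj by auto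
  have Zent: "Z$k$l = (if k = l then lam k else 0) + G$k$l" for k l by (simp add: Z_def diagm_entry)
  have Zent': "Z$k$l = (if k = l then lam l else 0) + G$k$l" for k l by (simp add: Z_def diagm_entry)
  have "(P ** Z)$i$j = (\<Sum>k\<in>UNIV. P$i$k * Z$k$j)" by (simp add: matrix_matrix_mult_def)
  also have "\<dots> = (\<Sum>k\<in>UNIV. P$i$k * (if k = j then lam j else 0)) + (\<Sum>k\<in>UNIV. P$i$k * G$k$j)"
    by (simp add: Zent' distrib_left sum.distrib)
  also have "(\<Sum>k\<in>UNIV. P$i$k * (if k = j then lam j else 0)) = P$i$j * lam j"
    by (simp add: if_distrib cong: if_cong)
  also have "(\<Sum>k\<in>UNIV. P$i$k * G$k$j) = (\<Sum>k\<in>UNIV. dP$i$k * G$k$j)"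
    using li by (intro sum.cong) (auto simp: P_entry)
  finally have e1: "(P ** Z)$i$j = P$i$j * lam j + (\<Sum>k\<in>UNIV. dP$i$k * G$k$j)" .
  have "(Z ** P)$i$j = (\<Sum>k\<in>UNIV. Z$i$k * P$k$j)" by (simp add: matrix_matrix_mult_def)
  also have "\<dots> = (\<Sum>k\<in>UNIV. (if i = k then lam i else 0) * P$k$j) + (\<Sum>k\<in>UNIV. G$i$k * P$k$j)"
    by (simp add: Zent distrib_right sum.distrib)
  also have "(\<Sum>k\<in>UNIV. (if i = k then lam i else 0) * P$k$j) = lam i * P$i$j"
  proof -
    have "\<And>k. (if i = k then lam i else 0) * P$k$j = (if i = k then lam i * P$i$j else 0)" by simp
    then show ?thesis by (simp only:) simp
  qed
  also have "(\<Sum>k\<in>UNIV. G$i$k * P$k$j) = (\<Sum>k\<in>UNIV. G$i$k * dP$k$j) + (\<Sum>k\<in>UNIV. G$i$k * (if k = j then max (lam k) 0 else 0))"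
    by (simp add: P_entry distrib_left sum.distrib)
  also have "(\<Sum>k\<in>UNIV. G$i$k * (if k = j then max (lam k) 0 else 0)) = G$i$j * lam j"
    using lj by (simp add: if_distrib cong: if_cong)
  finally have e2: "(Z ** P)$i$j = lam i * P$i$j + ((\<Sum>k\<in>UNIV. G$i$k * dP$k$j) + G$i$j * lam j)" .
  define R where "R = (\<Sum>k\<in>UNIV. G$i$k * dP$k$j) - (\<Sum>k\<in>UNIV. dP$i$k * G$k$j)"
  have eq: "P$i$j * (lam j - lam i) = lam j * G$i$j + R"
    using e1 e2 comm_PZ unfolding R_def by (simp add: algebra_simps)
  have R1: "\<bar>\<Sum>k\<in>UNIV. G$i$k * dP$k$j\<bar> \<le> real CARD('n) * (h * h)"
    by (rule sum_prod_bound) (auto intro: G_entry dP_entry)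
  have R2: "\<bar>\<Sum>k\<in>UNIV. dP$i$k * G$k$j\<bar> \<le> real CARD('n) * (h * h)"
    by (rule sum_prod_bound) (auto intro: G_entry dP_entry)
  have Rb: "\<bar>R\<bar> \<le> 2 * real CARD('n) * h\<^sup>2"
    using R1 R2 unfolding R_def power2_eq_square by linarith
  have dpos: "lam j - lam i \<ge> mu" using mu_le[of j] lj li by simp
  have dp: "lam j - lam i > 0" using li lj by simp
  have "P$i$j - lam j / (lam j - lam i) * G$i$j = R / (lam j - lam i)"
    using eq dp by (simp add: field_simps)
  then have "\<bar>P$i$j - lam j / (lam j - lam i) * G$i$j\<bar> = \<bar>R\<bar> / (lam j - lam i)"
    using dp by simp
  also have "\<dots> \<le> \<bar>R\<bar> / mu" using dpos mu_pos by (intro divide_left_mono) auto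
  also have "\<dots> \<le> 2 * real CARD('n) * h\<^sup>2 / mu" using Rb mu_pos by (intro divide_right_mono) auto
  finally show ?thesis .
qed

end

lemma sum_bound:
  fixes f :: "'n::finite \<Rightarrow> real"
  assumes "\<And>k. \<bar>f k\<bar> \<le> C"
  shows "\<bar>\<Sum>k\<in>UNIV. f k\<bar> \<le> real CARD('n) * C"
proof -
  have "\<bar>\<Sum>k\<in>UNIV. f k\<bar> \<le> (\<Sum>k\<in>UNIV. \<bar>f k\<bar>)" by (rule sum_abs)
  also have "\<dots> \<le> (\<Sum>k\<in>(UNIV::'n set). C)" by (rule sum_mono) (rule assms)
  finally show ?thesis by simp
qed

lemma mask_entry: "mask \<beta> M $ i $ j = (if i \<in> \<beta> \<and> j \<in> \<beta> then M$i$j else 0)"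
  by (simp add: mask_def)

lemma mask_diff: "mask \<beta> ((A::real^'n^'n) - B) = mask \<beta> A - mask \<beta> B"
  by (simp add: mask_def vec_eq_iff)

lemma psd_mask: assumes "psd (M::real^'n^'n)" shows "psd (mask \<beta> M)"
  unfolding psd_iff
proof (intro conjI allI)
  show "transpose (mask \<beta> M) = mask \<beta> M"
    using assms psd_iff[of M] by (auto simp: vec_eq_iff tr_entry mask_entry sym_entry)
  fix x :: "real^'n"
  define y :: "real^'n" where "y = (\<chi> i. if i \<in> \<beta> then x$i else 0)"
  have "qf (mask \<beta> M) x = qf M y"
    unfolding qf_def y_def mask_entry by (intro sum.cong refl) auto
  then show "0 \<le> qf (mask \<beta> M) x" using assms psd_iff by auto
qed

lemma mask_Kb: "psd (M::real^'n^'n) \<Longrightarrow> mask \<beta> M \<in> Kb \<beta>"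
  unfolding Kb_def using psd_mask by (auto simp: supp_in_def mask_entry)

context dsetup begin

definition "beta = {i. lam i = 0}"
definition "Bb = projPSD_block beta G"

lemma Bb_proj: "Bb = proj_onto (Kb beta) (mask beta G)"
  by (simp add: Bb_def projPSD_block_Kb)

lemma mask_Z: "mask beta Z = mask beta G"
  by (simp add: mask_def Z_def beta_def diagm_entry vec_eq_iff)

lemma PN_cross: assumes "lam i = 0" "lam k \<noteq> 0"
  shows "\<bar>P$i$k * N$i$k\<bar> \<le> 2 * h * (sqrt cc * (h * sqrt h))"
proof -
  have ik: "i \<noteq> k" using assms by auto
  have b0: "0 \<le> sqrt cc * (h * sqrt h)" using cc_pos h_nonneg by simp
  show ?thesis
  proof (cases "lam k > 0")
    case True
    have "\<bar>P$i$k\<bar> \<le> 2 * h" using P_entry[of i k] dP_entry[of i k] ik h_nonneg by simp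
    moreover have "\<bar>N$i$k\<bar> \<le> sqrt cc * (h * sqrt h)" using N_small[of i k] assms True by simp
    ultimately show ?thesis unfolding abs_mult by (intro mult_mono) auto
  next
    case False
    then have lk: "lam k < 0" using assms by simp
    have "\<bar>N$i$k\<bar> \<le> 2 * h" using N_entry[of i k] dN_entry[of i k] ik by simp
    moreover have "\<bar>P$i$k\<bar> \<le> sqrt cc * (h * sqrt h)" using P_small[of i k] assms lk by simp
    ultimately have "\<bar>P$i$k\<bar> * \<bar>N$i$k\<bar> \<le> sqrt cc * (h * sqrt h) * (2 * h)"
      using h_nonneg by (intro mult_mono) auto
    then show ?thesis unfolding abs_mult by (simp add: mult_ac)
  qed
qed

lemma mPmN_bound:
  "mask beta P \<bullet> mask beta N \<le> real CARD('n) * (real CARD('n) * (2 * h * (sqrt cc * (h * sqrt h))))"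
proof -
  let ?C = "2 * h * (sqrt cc * (h * sqrt h))"
  have Ti: "\<bar>\<Sum>j\<in>UNIV. mask beta P $ i $ j * mask beta N $ i $ j\<bar> \<le> real CARD('n) * ?C" for i
  proof (cases "i \<in> beta")
    case False
    then show ?thesis using cc_pos h_nonneg by (simp add: mask_entry)
  next
    case True
    have "(\<Sum>j\<in>UNIV. P$i$j * N$i$j) = (P ** N)$i$i"
      by (simp add: matrix_matrix_mult_def sym_entry[OF symN, of i])
    then have z: "(\<Sum>j\<in>UNIV. P$i$j * N$i$j) = 0" using PN(5) by simp
    have "(\<Sum>j\<in>UNIV. mask beta P $ i $ j * mask beta N $ i $ j)
        = (\<Sum>j\<in>UNIV. P$i$j * N$i$j) - (\<Sum>j\<in>UNIV. if j \<in> beta then 0 else P$i$j * N$i$j)"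
      unfolding sum_subtractf[symmetric] using True by (intro sum.cong refl) (simp add: mask_entry)
    also have "\<dots> = - (\<Sum>j\<in>UNIV. if j \<in> beta then 0 else P$i$j * N$i$j)" using z by simp
    finally have e: "\<bar>\<Sum>j\<in>UNIV. mask beta P $ i $ j * mask beta N $ i $ j\<bar>
        = \<bar>\<Sum>j\<in>UNIV. if j \<in> beta then 0 else P$i$j * N$i$j\<bar>" by simp
    have "\<bar>\<Sum>j\<in>UNIV. if j \<in> beta then 0 else P$i$j * N$i$j\<bar> \<le> real CARD('n) * ?C"
    proof (rule sum_bound)
      fix k
      show "\<bar>if k \<in> beta then 0 else P$i$k * N$i$k\<bar> \<le> ?C"
        using PN_cross[of i k] True cc_pos h_nonneg by (auto simp: beta_def)
    qed
    then show ?thesis using e by simp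
  qed
  have "mask beta P \<bullet> mask beta N = (\<Sum>i\<in>UNIV. \<Sum>j\<in>UNIV. mask beta P $ i $ j * mask beta N $ i $ j)"
    by (rule inner_mat)
  also have "\<dots> \<le> \<bar>\<dots>\<bar>" by simp
  also have "\<dots> \<le> real CARD('n) * (real CARD('n) * ?C)" by (rule sum_bound) (rule Ti)
  finally show ?thesis .
qed

lemma caseB_norm: "(norm (mask beta P - Bb))\<^sup>2 \<le> mask beta P \<bullet> mask beta N"
proof -
  have cKb: "is_cone (Kb beta :: (real^'n^'n) set)" by (rule cone_Kb)
  define N0 where "N0 = Bb - mask beta G"
  have mPN: "mask beta P - mask beta N = mask beta G"
    by (simp add: mask_diff[symmetric] N_def mask_Z)
  have e: "mask beta P - Bb = mask beta N - N0" using mPN unfolding N0_def by (simp add: algebra_simps)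
  have BbN0: "Bb \<bullet> N0 = 0"
    using cone_proj(2)[OF cKb, of "mask beta G"] unfolding Bb_proj[symmetric] N0_def
    by (simp add: inner_commute inner_diff_left inner_diff_right)
  have mPN0: "mask beta P \<bullet> N0 \<ge> 0"
    using cone_proj(3)[OF cKb mask_Kb[OF PN(1)], of "mask beta G"] unfolding Bb_proj[symmetric] N0_def
    by (simp add: inner_commute inner_diff_left inner_diff_right)
  have BbmN: "Bb \<bullet> mask beta N \<ge> 0"
  proof -
    have "Bb \<in> Kb beta" unfolding Bb_proj by (rule cone_proj(1)[OF cKb])
    then have "psd Bb" by (simp add: Kb_def)
    then show ?thesis using psd_selfdual psd_mask[OF PN(2)] by blast
  qed
  have "(norm (mask beta P - Bb))\<^sup>2 = (mask beta P - Bb) \<bullet> (mask beta N - N0)"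
    by (simp add: power2_norm_eq_inner e)
  also have "\<dots> = mask beta P \<bullet> mask beta N - mask beta P \<bullet> N0 - Bb \<bullet> mask beta N + Bb \<bullet> N0"
    by (simp add: inner_diff_left inner_diff_right)
  finally show ?thesis using BbN0 mPN0 BbmN by simp
qed

lemma caseB: assumes "lam i = 0" "lam j = 0"
  shows "\<bar>P$i$j - Bb$i$j\<bar> \<le> sqrt (real CARD('n) * (real CARD('n) * (2 * h * (sqrt cc * (h * sqrt h)))))"
proof -
  have "\<bar>P$i$j - Bb$i$j\<bar> = \<bar>(mask beta P - Bb)$i$j\<bar>" using assms by (simp add: mask_entry beta_def)
  also have "\<dots> \<le> norm (mask beta P - Bb)" by (rule entry_le_norm)
  also have "\<dots> = sqrt ((norm (mask beta P - Bb))\<^sup>2)" by simp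
  also have "\<dots> \<le> sqrt (real CARD('n) * (real CARD('n) * (2 * h * (sqrt cc * (h * sqrt h)))))"
    using caseB_norm mPmN_bound by (intro real_sqrt_le_mono) linarith
  finally show ?thesis .
qed

end

definition Mmat :: "('n::finite \<Rightarrow> real) \<Rightarrow> real^'n^'n \<Rightarrow> real^'n^'n" where
  "Mmat lam Hh = (let Bb = projPSD_block {i. lam i = 0} Hh in (\<chi> i j.
          if (lam i > 0 \<and> lam j \<ge> 0) \<or> (lam i \<ge> 0 \<and> lam j > 0) then Hh$i$j
          else if lam i = 0 \<and> lam j = 0 then Bb$i$j
          else if lam i < 0 \<and> lam j > 0 then lam j / (lam j - lam i) * Hh$i$j
          else if lam i > 0 \<and> lam j < 0 then lam i / (lam i - lam j) * Hh$j$i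
          else 0))"

lemma Dtilde_Mmat: "Dtilde Q lam H = Q ** Mmat lam (hatm Q H) ** transpose Q"
  by (simp add: Dtilde_def Mmat_def Let_def)

lemma Mmat_entry: "Mmat lam Hh $ i $ j =
          (if (lam i > 0 \<and> lam j \<ge> 0) \<or> (lam i \<ge> 0 \<and> lam j > 0) then Hh$i$j
          else if lam i = 0 \<and> lam j = 0 then projPSD_block {i. lam i = 0} Hh $i$j
          else if lam i < 0 \<and> lam j > 0 then lam j / (lam j - lam i) * Hh$i$j
          else if lam i > 0 \<and> lam j < 0 then lam i / (lam i - lam j) * Hh$j$i
          else 0)"
  by (simp add: Mmat_def Let_def)

context dsetup begin

definition "K0 = sqrt cc + sqrt (real CARD('n) * (real CARD('n) * (2 * sqrt cc))) + 2 * real CARD('n) / mu"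

lemma K0_nonneg: "K0 \<ge> 0" using cc_pos mu_pos by (simp add: K0_def)

lemma err_entry: assumes h1: "h \<le> 1"
  shows "\<bar>(P - Lp - Mmat lam G)$i$j\<bar> \<le> K0 * (h * sqrt (sqrt h))"
proof -
  define s where "s = sqrt h"
  define r where "r = sqrt s"
  have s0: "0 \<le> s" "s \<le> 1" using h_nonneg h1 by (auto simp: s_def)
  have r0: "0 \<le> r" "r \<le> 1" using s0 by (auto simp: r_def)
  have sr: "s \<le> r"
  proof -
    have "s = r * r" unfolding r_def using s0 by simp
    also have "\<dots> \<le> r * 1" using r0 by (intro mult_left_mono) auto
    finally show ?thesis by simp
  qed
  have hs: "h = s * s" unfolding s_def using h_nonneg by simp
  have hr: "h \<le> r"
  proof -
    have "h \<le> s * 1" unfolding hs using s0 by (intro mult_left_mono) auto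
    then show ?thesis using sr by simp
  qed
  have hsr: "h * s \<le> h * r" using sr h_nonneg by (rule mult_left_mono)
  have hh: "h * h \<le> h * r" using hr h_nonneg by (rule mult_left_mono)
  have c0: "0 \<le> sqrt cc" using cc_pos by simp
  let ?B = "K0 * (h * r)"
  have hr0: "0 \<le> h * r" using h_nonneg r0 by simp
  have bA: "sqrt cc * (h * s) \<le> ?B"
  proof -
    have "sqrt cc * (h * s) \<le> sqrt cc * (h * r)" using hsr c0 by (rule mult_left_mono)
    also have "\<dots> \<le> K0 * (h * r)" using hr0 cc_pos mu_pos by (intro mult_right_mono) (auto simp: K0_def)
    finally show ?thesis .
  qed
  have bB: "sqrt (real CARD('n) * (real CARD('n) * (2 * h * (sqrt cc * (h * s))))) \<le> ?B"
  proof -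
    have q: "(h * r)\<^sup>2 = h * (h * s)"
    proof -
      have "r * r = s" unfolding r_def using s0 by simp
      then show ?thesis by (simp add: power2_eq_square mult_ac)
    qed
    have "real CARD('n) * (real CARD('n) * (2 * h * (sqrt cc * (h * s))))
        = (real CARD('n) * (real CARD('n) * (2 * sqrt cc))) * (h * r)\<^sup>2"
      unfolding q by (simp add: mult_ac)
    then have "sqrt (real CARD('n) * (real CARD('n) * (2 * h * (sqrt cc * (h * s)))))
        = sqrt (real CARD('n) * (real CARD('n) * (2 * sqrt cc))) * sqrt ((h * r)\<^sup>2)"
      by (simp only: real_sqrt_mult)
    also have "\<dots> = sqrt (real CARD('n) * (real CARD('n) * (2 * sqrt cc))) * (h * r)" using hr0 by simp
    also have "\<dots> \<le> K0 * (h * r)" using hr0 cc_pos mu_pos by (intro mult_right_mono) (auto simp: K0_def)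
    finally show ?thesis .
  qed
  have bC: "2 * real CARD('n) * h\<^sup>2 / mu \<le> ?B"
  proof -
    have "2 * real CARD('n) * h\<^sup>2 / mu = (2 * real CARD('n) / mu) * (h * h)" by (simp add: power2_eq_square)
    also have "\<dots> \<le> (2 * real CARD('n) / mu) * (h * r)" by (rule mult_left_mono[OF hh]) (use mu_pos in simp)
    also have "\<dots> \<le> K0 * (h * r)" using hr0 cc_pos mu_pos by (intro mult_right_mono) (auto simp: K0_def)
    finally show ?thesis .
  qed
  have Lpe: "Lp$i$j = (if i = j then max (lam i) 0 else 0)" by (simp add: Lp_def diagm_entry)
  have "\<bar>(P - Lp - Mmat lam G)$i$j\<bar> \<le> ?B"
  proof (cases "(lam i > 0 \<and> lam j \<ge> 0) \<or> (lam i \<ge> 0 \<and> lam j > 0)")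
    case True
    have "(P - Lp - Mmat lam G)$i$j = N$i$j"
      using True N_entry[of i j] P_entry[of i j] dN_eq by (auto simp: Mmat_entry Lpe)
    then show ?thesis using N_small[OF True] bA by (simp add: s_def)
  next
    case F1: False
    show ?thesis
    proof (cases "lam i = 0 \<and> lam j = 0")
      case True
      have "(P - Lp - Mmat lam G)$i$j = P$i$j - Bb$i$j"
        using True F1 by (simp add: Mmat_entry Lpe Bb_def beta_def)
      then show ?thesis using caseB[of i j] True bB by (simp add: s_def)
    next
      case F2: False
      show ?thesis
      proof (cases "lam i < 0 \<and> lam j > 0")
        case True
        have "(P - Lp - Mmat lam G)$i$j = P$i$j - lam j / (lam j - lam i) * G$i$j"
          using True F1 F2 by (auto simp: Mmat_entry Lpe)
        then show ?thesis using caseC[of i j] True bC by simp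
      next
        case F3: False
        show ?thesis
        proof (cases "lam i > 0 \<and> lam j < 0")
          case True
          have "(P - Lp - Mmat lam G)$i$j = P$j$i - lam i / (lam i - lam j) * G$j$i"
            using True F1 F2 F3 sym_entry[OF symP, of i j] by (auto simp: Mmat_entry Lpe)
          then show ?thesis using caseC[of j i] True bC by simp
        next
          case F4: False
          have lij: "(lam i < 0 \<and> lam j \<le> 0) \<or> (lam i \<le> 0 \<and> lam j < 0)"
            using F1 F2 F3 F4 by auto
          have m0: "Mmat lam G $i$j = 0" using F1 F2 F3 F4 by (simp only: Mmat_entry if_False)
          have l0: "Lp$i$j = 0" using lij by (auto simp: Lpe)
          have "(P - Lp - Mmat lam G)$i$j = P$i$j" using m0 l0 by simp
          then show ?thesis using P_small[OF lij] bA by (simp add: s_def)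
        qed
      qed
    qed
  qed
  then show ?thesis by (simp add: r_def s_def)
qed

lemma err_norm: assumes h1: "h \<le> 1"
  shows "norm (P - Lp - Mmat lam G) \<le> real CARD('n) * (real CARD('n) * (K0 * (h * sqrt (sqrt h))))"
proof -
  have "norm (P - Lp - Mmat lam G) \<le> (\<Sum>i\<in>UNIV. \<Sum>j\<in>UNIV. \<bar>(P - Lp - Mmat lam G)$i$j\<bar>)"
    by (rule norm_le_sum_entries)
  also have "\<dots> \<le> (\<Sum>i\<in>(UNIV::'n set). \<Sum>j\<in>(UNIV::'n set). K0 * (h * sqrt (sqrt h)))"
    by (intro sum_mono) (rule err_entry[OF h1])
  finally show ?thesis by simp
qed

end

lemma matrix_inv_props:
  assumes "invertible (M::real^'m^'m)"
  shows "M ** matrix_inv M = mat 1" "matrix_inv M ** M = mat 1"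
proof -
  have "\<exists>A'. M ** A' = mat 1 \<and> A' ** M = mat 1" using assms unfolding invertible_def by blast
  then have "M ** matrix_inv M = mat 1 \<and> matrix_inv M ** M = mat 1"
    unfolding matrix_inv_def by (rule someI_ex)
  then show "M ** matrix_inv M = mat 1" "matrix_inv M ** M = mat 1" by auto
qed

lemma opA_opAadj: "opA A (opAadj A y) = gramA A *v y"
  by (simp add: opA_def opAadj_def gramA_def matrix_vector_mult_def vec_eq_iff inner_sum_right mult_ac)

lemma inner_vec_real: "(y::real^'m) \<bullet> v = (\<Sum>k\<in>UNIV. y$k * v$k)"
  by (simp add: inner_vec_def)

lemma inner_opAadj: "opAadj A y \<bullet> X = y \<bullet> opA A X"
proof -
  have "opAadj A y \<bullet> X = (\<Sum>k\<in>UNIV. y$k * (A k \<bullet> X))" by (simp add: opAadj_def inner_sum_left)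
  also have "\<dots> = y \<bullet> opA A X" unfolding inner_vec_real[of y] by (simp add: opA_def)
  finally show ?thesis .
qed

lemma opA_add: "opA A (X + Y) = opA A X + opA A Y"
  by (simp add: opA_def vec_eq_iff inner_add_right)
lemma opA_diff: "opA A (X - Y) = opA A X - opA A Y"
  by (simp add: opA_def vec_eq_iff inner_diff_right)
lemma opA_scale: "opA A (c *\<^sub>R X) = c *\<^sub>R opA A X"
  by (simp add: opA_def vec_eq_iff)
lemma opAadj_add: "opAadj A (x + y) = opAadj A x + opAadj A y"
  by (simp add: opAadj_def scaleR_add_left sum.distrib)
lemma opAadj_diff: "opAadj A (x - y) = opAadj A x - opAadj A y"
  by (simp add: opAadj_def scaleR_diff_left sum_subtractf)
lemma opAadj_scale: "opAadj A (c *\<^sub>R x) = c *\<^sub>R opAadj A x"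
  by (simp add: opAadj_def scaleR_sum_right)

lemma gram_invertible:
  assumes surj: "\<forall>v. \<exists>X. transpose X = X \<and> opA A X = v"
  shows "invertible (gramA A)"
proof -
  have "\<forall>y. gramA A *v y = 0 \<longrightarrow> y = 0"
  proof (intro allI impI)
    fix y assume g: "gramA A *v y = 0"
    have "opAadj A y \<bullet> opAadj A y = y \<bullet> opA A (opAadj A y)" by (rule inner_opAadj)
    also have "\<dots> = 0" using g by (simp add: opA_opAadj)
    finally have z: "opAadj A y = 0" by simp
    obtain X where "opA A X = y" using surj by blast
    then have "y \<bullet> y = opAadj A y \<bullet> X" by (simp add: inner_opAadj)
    then show "y = 0" using z by simp
  qed
  then have "\<exists>B. B ** gramA A = mat 1" using matrix_left_invertible_ker by blast
  then show ?thesis using invertible_left_inverse by blast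
qed

locale Asetup =
  fixes A :: "'m::finite \<Rightarrow> real^'n^'n"
  assumes surj: "\<forall>v. \<exists>X. transpose X = X \<and> opA A X = v"
begin

lemma Ginv: "gramA A ** matrix_inv (gramA A) = mat 1"
  using matrix_inv_props[OF gram_invertible[OF surj]] by simp

lemma PA: "opA A (projP A H) = opA A H"
proof -
  have "opA A (projP A H) = gramA A *v (matrix_inv (gramA A) *v opA A H)"
    by (simp add: projP_def opA_opAadj)
  also have "\<dots> = opA A H" by (simp add: matrix_vector_mul_assoc Ginv)
  finally show ?thesis .
qed

lemma P_idem: "projP A (projP A H) = projP A H"
  unfolding projP_def[of A "projP A H"] PA by (simp add: projP_def)

lemma P_ker: "opA A (H - projP A H) = 0"
  by (simp add: opA_diff PA)

lemma P_orth: "projP A X \<bullet> (Y - projP A Y) = 0"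
  unfolding projP_def[of A X] inner_opAadj P_ker by simp

lemma P_add: "projP A (X + Y) = projP A X + projP A Y"
  by (simp add: projP_def opA_add matrix_vector_right_distrib opAadj_add)
lemma P_diff: "projP A (X - Y) = projP A X - projP A Y"
  by (simp add: projP_def opA_diff matrix_vector_mult_diff_distrib opAadj_diff)
lemma P_scale: "projP A (c *\<^sub>R X) = c *\<^sub>R projP A X"
  by (simp add: projP_def opA_scale matrix_vector_mult_scaleR opAadj_scale)

lemma inner_expand: "((a::real^'n^'n) + b) \<bullet> (a + b) = a \<bullet> a + 2 * (a \<bullet> b) + b \<bullet> b"
  by (simp add: inner_add_left inner_add_right inner_commute)

lemma inner_expand2: "((a::real^'n^'n) - b) \<bullet> (a - b) = a \<bullet> a - 2 * (a \<bullet> b) + b \<bullet> b"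
  by (simp add: inner_diff_left inner_diff_right inner_commute)

lemma P_pyth: "(norm (projP A X))\<^sup>2 + (norm (X - projP A X))\<^sup>2 = (norm X)\<^sup>2"
proof -
  have "(norm X)\<^sup>2 = (projP A X + (X - projP A X)) \<bullet> (projP A X + (X - projP A X))"
    by (simp add: power2_norm_eq_inner)
  also have "\<dots> = (norm (projP A X))\<^sup>2 + 2 * (projP A X \<bullet> (X - projP A X)) + (norm (X - projP A X))\<^sup>2"
    unfolding inner_expand by (simp add: power2_norm_eq_inner)
  finally show ?thesis using P_orth by simp
qed

lemma P_le: "norm (projP A X) \<le> norm X"
proof -
  have "(norm (projP A X))\<^sup>2 \<le> (norm X)\<^sup>2" using P_pyth[of X] by (metis le_add_same_cancel1 zero_le_power2)
  then show ?thesis by (rule power2_le_imp_le) simp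
qed

lemma Pc_le: "norm (X - projP A X) \<le> norm X"
proof -
  have "(norm (X - projP A X))\<^sup>2 \<le> (norm X)\<^sup>2" using P_pyth[of X] by (metis le_add_same_cancel2 zero_le_power2)
  then show ?thesis by (rule power2_le_imp_le) simp
qed

lemma P_range: "projP A X \<in> range (opAadj A)"
  unfolding projP_def by simp

lemma refl_norm: "norm (X - 2 *\<^sub>R projP A X) = norm X"
proof -
  define a where "a = X - projP A X"
  define b where "b = projP A X"
  have e: "X - 2 *\<^sub>R projP A X = a - b" unfolding a_def b_def scaleR_2 by (simp add: algebra_simps)
  have ab: "a \<bullet> b = 0" unfolding a_def b_def using P_orth[of X X] by (simp add: inner_commute)
  have pyth: "b \<bullet> b + a \<bullet> a = X \<bullet> X" using P_pyth[of X] unfolding a_def b_def by (simp add: power2_norm_eq_inner)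
  have "(norm (X - 2 *\<^sub>R projP A X))\<^sup>2 = (a - b) \<bullet> (a - b)"
    unfolding e by (rule power2_norm_eq_inner)
  also have "\<dots> = a \<bullet> a - 2 * (a \<bullet> b) + b \<bullet> b" by (rule inner_expand2)
  also have "\<dots> = (norm X)\<^sup>2" using ab pyth by (simp add: power2_norm_eq_inner)
  finally show ?thesis by (metis norm_ge_zero power2_eq_imp_eq)
qed

lemma orth_sum_norm: "(norm (projP A a + (b - projP A b)))\<^sup>2 = (norm (projP A a))\<^sup>2 + (norm (b - projP A b))\<^sup>2"
proof -
  have "(norm (projP A a + (b - projP A b)))\<^sup>2 = (projP A a + (b - projP A b)) \<bullet> (projP A a + (b - projP A b))"
    by (rule power2_norm_eq_inner)
  also have "\<dots> = (norm (projP A a))\<^sup>2 + 2 * (projP A a \<bullet> (b - projP A b)) + (norm (b - projP A b))\<^sup>2"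
    unfolding inner_expand by (simp add: power2_norm_eq_inner)
  finally show ?thesis using P_orth by simp
qed

lemma P_eq_norm: "norm (projP A a) = norm a \<Longrightarrow> a \<in> range (opAadj A)"
proof -
  assume e: "norm (projP A a) = norm a"
  then have "(norm (a - projP A a))\<^sup>2 = 0" using P_pyth[of a] by simp
  then have "a = projP A a" by simp
  then show ?thesis using P_range by metis
qed

lemma Pc_eq_norm: "norm (b - projP A b) = norm b \<Longrightarrow> opA A b = 0"
proof -
  assume e: "norm (b - projP A b) = norm b"
  then have "(norm (projP A b))\<^sup>2 = 0" using P_pyth[of b] by simp
  then have pb: "projP A b = 0" by simp
  have "opA A (projP A b) = 0" unfolding pb by (simp add: opA_def vec_eq_iff)
  then show ?thesis using PA[of b] by simp
qed

end

lemma sym_opAadj: assumes "\<And>i. transpose (A i) = A i" shows "transpose (opAadj A y) = opAadj A y"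
proof -
  have "transpose (opAadj A y) = (\<Sum>i\<in>UNIV. y$i *\<^sub>R transpose (A i))"
    by (simp add: opAadj_def transpose_def vec_eq_iff)
  then show ?thesis using assms by (simp add: opAadj_def)
qed

lemma theta_props: assumes "lam i < (0::real)" "lam j > 0"
  shows "0 < lam j / (lam j - lam i)" "lam j / (lam j - lam i) < 1"
  using assms by (auto simp: divide_simps)

lemma Bb_supp: "projPSD_block \<beta> (Hh::real^'n^'n) \<in> Kb \<beta>"
  unfolding projPSD_block_Kb by (rule cone_proj(1)[OF cone_Kb])

lemma Bb_entry0: "\<not> (i \<in> \<beta> \<and> j \<in> \<beta>) \<Longrightarrow> projPSD_block \<beta> (Hh::real^'n^'n) $ i $ j = 0"
  using Bb_supp[of \<beta> Hh] unfolding Kb_def supp_in_def by blast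

lemma Bb_sym: "transpose (projPSD_block \<beta> (Hh::real^'n^'n)) = projPSD_block \<beta> Hh"
  using Bb_supp[of \<beta> Hh] unfolding Kb_def psd_def by blast

definition tt :: "('n \<Rightarrow> real) \<Rightarrow> real^'n^'n \<Rightarrow> 'n \<Rightarrow> 'n \<Rightarrow> real" where
  "tt lam Hh i j = (if lam i = 0 \<and> lam j = 0 then 0 else (Hh$i$j - Mmat lam Hh$i$j) * Mmat lam Hh$i$j)"

lemma tt_nonneg: assumes "transpose (Hh::real^'n^'n) = Hh" shows "0 \<le> tt lam Hh i j"
proof -
  have hs: "Hh$j$i = Hh$i$j" using sym_entry[OF assms] by simp
  show ?thesis
  proof (cases "lam i < 0 \<and> lam j > 0")
    case True
    let ?t = "lam j / (lam j - lam i)"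
    have "tt lam Hh i j = ?t * (1 - ?t) * (Hh$i$j)\<^sup>2"
      using True by (simp add: tt_def Mmat_entry power2_eq_square algebra_simps)
    moreover have "0 \<le> ?t * (1 - ?t)" using theta_props[of lam i j] True by simp
    ultimately show ?thesis by (metis zero_le_power2 mult_nonneg_nonneg)
  next
    case F1: False
    show ?thesis
    proof (cases "lam i > 0 \<and> lam j < 0")
      case True
      let ?t = "lam i / (lam i - lam j)"
      have "tt lam Hh i j = ?t * (1 - ?t) * (Hh$i$j)\<^sup>2"
        using True hs by (simp add: tt_def Mmat_entry power2_eq_square algebra_simps)
      moreover have "0 \<le> ?t * (1 - ?t)" using theta_props[of lam j i] True by simp
      ultimately show ?thesis by (metis zero_le_power2 mult_nonneg_nonneg)
    next
      case F2: False
      have "tt lam Hh i j = 0" using F1 F2 by (auto simp: tt_def Mmat_entry)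
      then show ?thesis by simp
    qed
  qed
qed

lemma tt_zero: assumes "transpose (Hh::real^'n^'n) = Hh" "tt lam Hh i j = 0" "lam i < 0" "lam j > 0"
  shows "Hh$i$j = 0"
proof -
  define t where "t = lam j / (lam j - lam i)"
  have "tt lam Hh i j = t * (1 - t) * (Hh$i$j)\<^sup>2"
    using assms(3,4) by (simp add: tt_def Mmat_entry power2_eq_square algebra_simps t_def)
  moreover have p: "0 < t * (1 - t)" using theta_props[of lam i j] assms unfolding t_def by simp
  ultimately have "(t * (1 - t)) * (Hh$i$j)\<^sup>2 = 0" using assms(2) by simp
  then have "(Hh$i$j)\<^sup>2 = 0" using p by (metis mult_eq_0_iff less_irrefl)
  then show ?thesis by simp
qed

lemma cross_eq: "(Hh - Mmat lam Hh) \<bullet> Mmat lam Hh = (\<Sum>i\<in>UNIV. \<Sum>j\<in>UNIV. tt lam (Hh::real^'n^'n) i j)"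
proof -
  let ?\<beta> = "{i. lam i = 0}"
  let ?B = "projPSD_block ?\<beta> Hh"
  have pt: "(Hh$i$j - Mmat lam Hh$i$j) * Mmat lam Hh$i$j = (mask ?\<beta> Hh - ?B)$i$j * ?B$i$j + tt lam Hh i j" for i j
    using Bb_entry0[of i ?\<beta> j Hh] by (auto simp: tt_def Mmat_entry mask_entry)
  have z: "(mask ?\<beta> Hh - ?B) \<bullet> ?B = 0"
    unfolding projPSD_block_Kb by (rule cone_proj(2)[OF cone_Kb])
  have "(Hh - Mmat lam Hh) \<bullet> Mmat lam Hh = (\<Sum>i\<in>UNIV. \<Sum>j\<in>UNIV. (Hh$i$j - Mmat lam Hh$i$j) * Mmat lam Hh$i$j)"
    by (simp add: inner_mat)
  also have "\<dots> = (\<Sum>i\<in>UNIV. \<Sum>j\<in>UNIV. (mask ?\<beta> Hh - ?B)$i$j * ?B$i$j) + (\<Sum>i\<in>UNIV. \<Sum>j\<in>UNIV. tt lam Hh i j)"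
    by (simp add: pt sum.distrib)
  also have "(\<Sum>i\<in>UNIV. \<Sum>j\<in>UNIV. (mask ?\<beta> Hh - ?B)$i$j * ?B$i$j) = 0"
    using z by (simp add: inner_mat)
  finally show ?thesis by simp
qed

lemma cross_nonneg: "transpose (Hh::real^'n^'n) = Hh \<Longrightarrow> 0 \<le> (Hh - Mmat lam Hh) \<bullet> Mmat lam Hh"
  unfolding cross_eq by (intro sum_nonneg) (rule tt_nonneg)

lemma cross_zero: assumes "transpose (Hh::real^'n^'n) = Hh" "(Hh - Mmat lam Hh) \<bullet> Mmat lam Hh = 0"
  "lam i < 0" "lam j > 0" shows "Hh$i$j = 0"
proof -
  have "(\<Sum>i\<in>UNIV. \<Sum>j\<in>UNIV. tt lam Hh i j) = 0" using assms(2) cross_eq[of Hh lam] by simp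
  then have "\<forall>i\<in>UNIV. (\<Sum>j\<in>UNIV. tt lam Hh i j) = 0"
    by (subst sum_nonneg_eq_0_iff[symmetric]) (auto intro!: sum_nonneg tt_nonneg[OF assms(1)])
  then have "\<forall>j\<in>UNIV. tt lam Hh i j = 0"
    by (subst sum_nonneg_eq_0_iff[symmetric]) (auto intro!: tt_nonneg[OF assms(1)])
  then show ?thesis using tt_zero[OF assms(1) _ assms(3,4)] by blast
qed

lemma Mmat_sym: assumes "transpose (Hh::real^'n^'n) = Hh" shows "transpose (Mmat lam Hh) = Mmat lam Hh"
proof -
  have hs: "\<And>i j. Hh$j$i = Hh$i$j" using sym_entry[OF assms] by simp
  have bs: "\<And>i j. projPSD_block {i. lam i = 0} Hh $ j $ i = projPSD_block {i. lam i = 0} Hh $ i $ j"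
    using sym_entry[OF Bb_sym] by metis
  show ?thesis unfolding vec_eq_iff tr_entry Mmat_entry
    using hs bs by auto
qed

locale Msetup = Asetup A for A :: "'m::finite \<Rightarrow> real^'n^'n" +
  fixes Q :: "real^'n^'n" and lam :: "'n \<Rightarrow> real"
  assumes orth: "orthogonal_matrix Q"
  and pnd: "NX Q lam \<inter> range (opAadj A) = {0}"
  and dnd: "NS Q lam \<inter> {H. opA A H = 0} = {0}"
begin

abbreviation "DD H \<equiv> Dtilde Q lam H"
abbreviation "MM H \<equiv> Mtilde A Q lam H"

lemma Mt_eq: "MM H = projP A (H - DD H) + (DD H - projP A (DD H))"
  by (simp add: Mtilde_def)

lemma H_conj: "H = Q ** hatm Q H ** transpose Q" using conj_hat[OF orth] by simp

lemma HD_conj: "H - DD H = Q ** (hatm Q H - Mmat lam (hatm Q H)) ** transpose Q"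
  unfolding Dtilde_Mmat conj_diff using conj_hat[OF orth] by simp

lemma cross_H: assumes "transpose H = H"
  shows "(H - DD H) \<bullet> DD H = (hatm Q H - Mmat lam (hatm Q H)) \<bullet> Mmat lam (hatm Q H)"
proof -
  have "(H - DD H) \<bullet> DD H = (Q ** (hatm Q H - Mmat lam (hatm Q H)) ** transpose Q) \<bullet> (Q ** Mmat lam (hatm Q H) ** transpose Q)"
    by (subst HD_conj) (simp only: Dtilde_Mmat)
  also have "\<dots> = (hatm Q H - Mmat lam (hatm Q H)) \<bullet> Mmat lam (hatm Q H)" by (rule conj_inner2[OF orth])
  finally show ?thesis .
qed

lemma cross_H_nonneg: "transpose H = H \<Longrightarrow> 0 \<le> (H - DD H) \<bullet> DD H"
  using cross_H cross_nonneg hat_sym by metis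

lemma Mt_sq: assumes "transpose H = H"
  shows "(norm (MM H))\<^sup>2 = (norm (projP A (H - DD H)))\<^sup>2 + (norm (DD H - projP A (DD H)))\<^sup>2"
    and "(norm (projP A (H - DD H)))\<^sup>2 + (norm (DD H - projP A (DD H)))\<^sup>2
          \<le> (norm (H - DD H))\<^sup>2 + (norm (DD H))\<^sup>2"
    and "(norm (H - DD H))\<^sup>2 + (norm (DD H))\<^sup>2 = (norm H)\<^sup>2 - 2 * ((H - DD H) \<bullet> DD H)"
proof -
  show "(norm (MM H))\<^sup>2 = (norm (projP A (H - DD H)))\<^sup>2 + (norm (DD H - projP A (DD H)))\<^sup>2"
    unfolding Mt_eq orth_sum_norm by simp
  show "(norm (projP A (H - DD H)))\<^sup>2 + (norm (DD H - projP A (DD H)))\<^sup>2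
          \<le> (norm (H - DD H))\<^sup>2 + (norm (DD H))\<^sup>2"
    using P_le[of "H - DD H"] Pc_le[of "DD H"] by (intro add_mono power_mono) auto
  have "(norm H)\<^sup>2 = ((H - DD H) + DD H) \<bullet> ((H - DD H) + DD H)" by (simp add: power2_norm_eq_inner)
  also have "\<dots> = (H - DD H) \<bullet> (H - DD H) + 2 * ((H - DD H) \<bullet> DD H) + DD H \<bullet> DD H" by (rule inner_expand)
  finally show "(norm (H - DD H))\<^sup>2 + (norm (DD H))\<^sup>2 = (norm H)\<^sup>2 - 2 * ((H - DD H) \<bullet> DD H)"
    by (simp add: power2_norm_eq_inner)
qed

lemma Mt_le: assumes "transpose H = H" shows "norm (MM H) \<le> norm H"
proof -
  have "(norm (MM H))\<^sup>2 \<le> (norm H)\<^sup>2"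
    using Mt_sq[OF assms] cross_H_nonneg[OF assms] by linarith
  then show ?thesis by (rule power2_le_imp_le) simp
qed

lemma Mt_lt: assumes sH: "transpose H = H" and nz: "H \<noteq> 0" shows "norm (MM H) < norm H"
proof (rule ccontr)
  assume "\<not> norm (MM H) < norm H"
  then have eqn: "norm (MM H) = norm H" using Mt_le[OF sH] by simp
  let ?a = "H - DD H" and ?b = "DD H"
  let ?Hh = "hatm Q H"
  let ?M = "Mmat lam ?Hh"
  have c0: "0 \<le> ?a \<bullet> ?b" by (rule cross_H_nonneg[OF sH])
  have pa: "(norm (projP A ?a))\<^sup>2 \<le> (norm ?a)\<^sup>2" using P_le[of ?a] by (intro power_mono) auto
  have pb: "(norm (?b - projP A ?b))\<^sup>2 \<le> (norm ?b)\<^sup>2" using Pc_le[of ?b] by (intro power_mono) auto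
  have all: "(norm H)\<^sup>2 \<le> (norm H)\<^sup>2 - 2 * (?a \<bullet> ?b) - ((norm ?a)\<^sup>2 - (norm (projP A ?a))\<^sup>2)
              - ((norm ?b)\<^sup>2 - (norm (?b - projP A ?b))\<^sup>2)"
  proof -
    have "(norm (MM H))\<^sup>2 = (norm H)\<^sup>2" using eqn by simp
    then show ?thesis using Mt_sq[OF sH] by linarith
  qed
  have ab0: "?a \<bullet> ?b = 0" using all c0 pa pb by linarith
  have ea: "(norm (projP A ?a))\<^sup>2 = (norm ?a)\<^sup>2" using all c0 pa pb by linarith
  have eb: "(norm (?b - projP A ?b))\<^sup>2 = (norm ?b)\<^sup>2" using all c0 pa pb by linarith
  have arange: "?a \<in> range (opAadj A)"
    using ea by (intro P_eq_norm) (metis norm_ge_zero power2_eq_imp_eq)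
  have bker: "opA A ?b = 0"
    using eb by (intro Pc_eq_norm) (metis norm_ge_zero power2_eq_imp_eq)
  have sHh: "transpose ?Hh = ?Hh" by (rule hat_sym[OF sH])
  have hs: "\<And>i j. ?Hh$j$i = ?Hh$i$j" using sym_entry[OF sHh] by simp
  have sM: "transpose ?M = ?M" by (rule Mmat_sym[OF sHh])
  have cz0: "(?Hh - ?M) \<bullet> ?M = 0" using ab0 cross_H[OF sH] by simp
  have cz: "\<And>i j. lam i < 0 \<Longrightarrow> lam j > 0 \<Longrightarrow> ?Hh$i$j = 0"
    using cross_zero[OF sHh cz0] by blast
  have "?a \<in> NX Q lam"
    unfolding NX_def HD_conj
  proof (intro CollectI exI conjI)
    show "Q ** (?Hh - ?M) ** transpose Q = Q ** (?Hh - ?M) ** transpose Q" ..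
    show "transpose (?Hh - ?M) = ?Hh - ?M" using sHh sM by (simp add: tr_diff)
    show "\<forall>i j. 0 < lam i \<or> 0 < lam j \<longrightarrow> (?Hh - ?M) $ i $ j = 0"
    proof (intro allI impI)
      fix i j assume "0 < lam i \<or> 0 < lam j"
      then show "(?Hh - ?M) $ i $ j = 0"
        using cz[of i j] cz[of j i] hs[of i j] by (auto simp: Mmat_entry)
    qed
  qed
  then have a0: "?a = 0" using arange pnd by blast
  have "?b \<in> NS Q lam"
    unfolding NS_def Dtilde_Mmat
  proof (intro CollectI exI conjI)
    show "Q ** ?M ** transpose Q = Q ** ?M ** transpose Q" ..
    show "transpose ?M = ?M" by (rule sM)
    show "\<forall>i j. lam i < 0 \<or> lam j < 0 \<longrightarrow> ?M $ i $ j = 0"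
    proof (intro allI impI)
      fix i j assume "lam i < 0 \<or> lam j < 0"
      then show "?M $ i $ j = 0"
        using cz[of i j] cz[of j i] hs[of i j] by (auto simp: Mmat_entry)
    qed
  qed
  then have b0: "?b = 0" using bker dnd by blast
  have "H = ?a + ?b" by simp
  then show False using a0 b0 nz by simp
qed

end

lemma mask_norm_le: "norm (mask \<beta> (X::real^'n^'n)) \<le> norm X"
proof (rule norm_le_componentwise_cart)
  fix i
  show "norm (mask \<beta> X $ i) \<le> norm (X $ i)"
    by (rule norm_le_componentwise_cart) (simp add: mask_entry)
qed

lemma Bb_lip: "norm (projPSD_block \<beta> (G1::real^'n^'n) - projPSD_block \<beta> G2) \<le> norm (G1 - G2)"
proof -
  have c: "closed (Kb \<beta> :: (real^'n^'n) set)" "convex (Kb \<beta> :: (real^'n^'n) set)" "(Kb \<beta> :: (real^'n^'n) set) \<noteq> {}"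
    using cone_Kb[of \<beta>] unfolding is_cone_def by auto
  have "norm (projPSD_block \<beta> G1 - projPSD_block \<beta> G2) \<le> norm (mask \<beta> G1 - mask \<beta> G2)"
    unfolding projPSD_block_Kb by (rule proj_lip[OF c])
  also have "\<dots> \<le> norm (G1 - G2)" unfolding mask_diff[symmetric] by (rule mask_norm_le)
  finally show ?thesis .
qed

lemma theta_abs: assumes "0 < t" "t < (1::real)" shows "\<bar>t * x\<bar> \<le> \<bar>x\<bar>"
proof -
  have "t * \<bar>x\<bar> \<le> 1 * \<bar>x\<bar>" using assms by (intro mult_right_mono) auto
  then show ?thesis using assms by (simp add: abs_mult)
qed

lemma Mmat_lip_entry: "\<bar>(Mmat lam G1 - Mmat lam (G2::real^'n^'n))$i$j\<bar> \<le> norm (G1 - G2)"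
proof -
  have e1: "\<And>a b. \<bar>G1$a$b - G2$a$b\<bar> \<le> norm (G1 - G2)" using entry_le_norm[of "G1 - G2"] by simp
  have e2: "\<bar>projPSD_block {i. lam i = 0} G1 $i$j - projPSD_block {i. lam i = 0} G2 $i$j\<bar> \<le> norm (G1 - G2)"
    using entry_le_norm[of "projPSD_block {i. lam i = 0} G1 - projPSD_block {i. lam i = 0} G2" i j] Bb_lip[of "{i. lam i = 0}" G1 G2]
    by simp
  show ?thesis
  proof (cases "lam i < 0 \<and> lam j > 0")
    case True
    have "\<bar>(Mmat lam G1 - Mmat lam G2)$i$j\<bar> = \<bar>lam j / (lam j - lam i) * (G1$i$j - G2$i$j)\<bar>"
      using True by (simp add: Mmat_entry right_diff_distrib)
    also have "\<dots> \<le> \<bar>G1$i$j - G2$i$j\<bar>" using theta_props[of lam i j] True by (intro theta_abs) auto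
    finally show ?thesis using e1[of i j] by linarith
  next
    case F1: False
    show ?thesis
    proof (cases "lam i > 0 \<and> lam j < 0")
      case True
      have "\<bar>(Mmat lam G1 - Mmat lam G2)$i$j\<bar> = \<bar>lam i / (lam i - lam j) * (G1$j$i - G2$j$i)\<bar>"
        using True by (simp add: Mmat_entry right_diff_distrib)
      also have "\<dots> \<le> \<bar>G1$j$i - G2$j$i\<bar>" using theta_props[of lam j i] True by (intro theta_abs) auto
      finally show ?thesis using e1[of j i] by linarith
    next
      case F2: False
      show ?thesis using F1 F2 e1[of i j] e2 norm_ge_zero[of "G1 - G2"] by (auto simp: Mmat_entry)
    qed
  qed
qed

lemma Mmat_lip: "norm (Mmat lam G1 - Mmat lam (G2::real^'n^'n)) \<le> real CARD('n) * (real CARD('n) * norm (G1 - G2))"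
proof -
  have "norm (Mmat lam G1 - Mmat lam G2) \<le> (\<Sum>i\<in>UNIV. \<Sum>j\<in>UNIV. \<bar>(Mmat lam G1 - Mmat lam G2)$i$j\<bar>)"
    by (rule norm_le_sum_entries)
  also have "\<dots> \<le> (\<Sum>i\<in>(UNIV::'n set). \<Sum>j\<in>(UNIV::'n set). norm (G1 - G2))"
    by (intro sum_mono) (rule Mmat_lip_entry)
  finally show ?thesis by simp
qed

lemma Mmat_scale: assumes "c \<ge> 0" shows "Mmat lam (c *\<^sub>R (G::real^'n^'n)) = c *\<^sub>R Mmat lam G"
proof -
  have "projPSD_block \<beta> (c *\<^sub>R G) = c *\<^sub>R projPSD_block \<beta> G" for \<beta>
  proof -
    have "mask \<beta> (c *\<^sub>R G) = c *\<^sub>R mask \<beta> G" by (simp add: mask_def vec_eq_iff)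
    then show ?thesis unfolding projPSD_block_Kb using cone_proj_homog[OF cone_Kb assms] by simp
  qed
  then show ?thesis by (simp add: vec_eq_iff Mmat_entry)
qed

lemma hat_scale: "hatm Q (c *\<^sub>R (H::real^'n^'n)) = c *\<^sub>R hatm Q H"
  by (simp add: hatm_def mm_scale_l mm_scale_r)

context Msetup begin

lemma DD_lip: "norm (DD H1 - DD H2) \<le> real CARD('n) * (real CARD('n) * norm (H1 - H2))"
proof -
  have "DD H1 - DD H2 = Q ** (Mmat lam (hatm Q H1) - Mmat lam (hatm Q H2)) ** transpose Q"
    by (simp add: Dtilde_Mmat conj_diff)
  then have "norm (DD H1 - DD H2) = norm (Mmat lam (hatm Q H1) - Mmat lam (hatm Q H2))"
    by (simp add: norm_conj[OF orth])
  also have "\<dots> \<le> real CARD('n) * (real CARD('n) * norm (hatm Q H1 - hatm Q H2))" by (rule Mmat_lip)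
  also have "norm (hatm Q H1 - hatm Q H2) = norm (H1 - H2)" by (simp add: hat_diff[symmetric] norm_hat[OF orth])
  finally show ?thesis .
qed

lemma MM_lip: "norm (MM H1 - MM H2) \<le> (1 + 2 * (real CARD('n) * real CARD('n))) * norm (H1 - H2)"
proof -
  let ?d = "DD H1 - DD H2"
  have "MM H1 - MM H2 = projP A ((H1 - H2) - ?d) + (?d - projP A ?d)"
    unfolding Mt_eq by (simp add: P_diff P_add algebra_simps)
  then have "norm (MM H1 - MM H2) \<le> norm (projP A ((H1 - H2) - ?d)) + norm (?d - projP A ?d)"
    by (simp add: norm_triangle_ineq)
  also have "\<dots> \<le> norm ((H1 - H2) - ?d) + norm ?d" by (intro add_mono P_le Pc_le)
  also have "\<dots> \<le> norm (H1 - H2) + norm ?d + norm ?d" using norm_triangle_ineq4[of "H1 - H2" ?d] by simp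
  also have "\<dots> \<le> norm (H1 - H2) + 2 * (real CARD('n) * (real CARD('n) * norm (H1 - H2)))"
    using DD_lip[of H1 H2] by simp
  finally show ?thesis by (simp add: algebra_simps)
qed

lemma DD_scale: "c \<ge> 0 \<Longrightarrow> DD (c *\<^sub>R H) = c *\<^sub>R DD H"
  by (simp add: Dtilde_Mmat hat_scale Mmat_scale mm_scale_l mm_scale_r)

lemma MM_scale: assumes "c \<ge> 0" shows "MM (c *\<^sub>R H) = c *\<^sub>R MM H"
proof -
  have e1: "c *\<^sub>R H - c *\<^sub>R DD H = c *\<^sub>R (H - DD H)" by (simp add: scaleR_diff_right)
  have e2: "c *\<^sub>R DD H - c *\<^sub>R projP A (DD H) = c *\<^sub>R (DD H - projP A (DD H))" by (simp add: scaleR_diff_right)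
  show ?thesis unfolding Mt_eq DD_scale[OF assms] e1 P_scale e2 scaleR_add_right ..
qed

lemma MM_zero: "MM 0 = 0"
  using MM_scale[of 0 0] by simp

end

definition Sph :: "(real^'n^'n) set" where "Sph = {H. transpose H = H \<and> norm H = 1}"

lemma Sph_compact: "compact (Sph :: (real^'n^'n) set)"
proof -
  have e: "(Sph :: (real^'n^'n) set) = {H. \<forall>i j. H$i$j = H$j$i} \<inter> {H. norm H = 1}"
    unfolding Sph_def by (auto simp: vec_eq_iff tr_entry)
  have "closed (Sph :: (real^'n^'n) set)" unfolding e
    by (intro closed_Int closed_Collect_all closed_Collect_eq continuous_intros)
  moreover have "bounded (Sph :: (real^'n^'n) set)" unfolding Sph_def bounded_iff by auto
  ultimately show ?thesis using compact_eq_bounded_closed by blast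
qed

lemma Sph_ne: "(Sph :: (real^'n^'n) set) \<noteq> {}"
proof -
  let ?I = "mat 1 :: real^'n^'n"
  have "?I \<noteq> 0" by (simp add: mat_def vec_eq_iff)
  then have "norm ?I > 0" by simp
  then have "(1 / norm ?I) *\<^sub>R ?I \<in> Sph" unfolding Sph_def by (simp add: transpose_scalar)
  then show ?thesis by blast
qed

context Msetup begin

lemma MM_cont: "continuous_on Sph (\<lambda>H. norm (MM H))"
proof (rule lipschitz_on_continuous_on)
  show "(1 + 2 * (real CARD('n) * real CARD('n)))-lipschitz_on Sph (\<lambda>H. norm (MM H))"
  proof (rule lipschitz_onI)
    fix x y :: "real^'n^'n"
    have "dist (norm (MM x)) (norm (MM y)) \<le> norm (MM x - MM y)"
      by (simp add: dist_real_def norm_triangle_ineq3)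
    also have "\<dots> \<le> (1 + 2 * (real CARD('n) * real CARD('n))) * norm (x - y)" by (rule MM_lip)
    finally show "dist (norm (MM x)) (norm (MM y)) \<le> (1 + 2 * (real CARD('n) * real CARD('n))) * dist x y"
      by (simp add: dist_norm)
  qed simp
qed

lemma sup_props:
  "(SUP H\<in>{H. transpose H = H \<and> norm H = 1}. norm (MM H)) < 1"
  "\<And>H. transpose H = H \<Longrightarrow> norm (MM H) \<le> (SUP H\<in>{H. transpose H = H \<and> norm H = 1}. norm (MM H)) * norm H"
proof -
  obtain H0 where H0: "H0 \<in> Sph" "\<forall>H\<in>Sph. norm (MM H) \<le> norm (MM H0)"
    using continuous_attains_sup[OF Sph_compact Sph_ne MM_cont] by blast
  have eq: "(SUP H\<in>{H. transpose H = H \<and> norm H = 1}. norm (MM H)) = norm (MM H0)"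
    unfolding Sph_def[symmetric] using H0 by (intro cSup_eq_maximum) auto
  have "norm (MM H0) < norm H0" using H0(1) by (intro Mt_lt) (auto simp: Sph_def)
  then show "(SUP H\<in>{H. transpose H = H \<and> norm H = 1}. norm (MM H)) < 1"
    using H0(1) eq by (simp add: Sph_def)
  fix H :: "real^'n^'n" assume sH: "transpose H = H"
  show "norm (MM H) \<le> (SUP H\<in>{H. transpose H = H \<and> norm H = 1}. norm (MM H)) * norm H"
  proof (cases "H = 0")
    case True
    then show ?thesis by (simp add: MM_zero)
  next
    case False
    then have np: "norm H > 0" by simp
    let ?U = "(1 / norm H) *\<^sub>R H"
    have U: "?U \<in> Sph" using sH np by (simp add: Sph_def transpose_scalar)
    have "MM H = norm H *\<^sub>R MM ?U" using MM_scale[of "1 / norm H" H] np by simp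
    then have "norm (MM H) = norm H * norm (MM ?U)" using np by simp
    also have "\<dots> \<le> norm H * norm (MM H0)" using H0(2) U np by (intro mult_left_mono) auto
    finally show ?thesis using eq by (simp add: mult.commute)
  qed
qed

end

lemma deriv_bound:
  fixes lam :: "'n::finite \<Rightarrow> real"
  shows "\<exists>L\<ge>0. \<forall>G::real^'n^'n. transpose G = G \<longrightarrow> norm G \<le> 1 \<longrightarrow>
     norm (proj_onto KP (diagm lam + G) - diagm (\<lambda>i. max (lam i) 0) - Mmat lam G)
        \<le> L * (norm G * sqrt (sqrt (norm G)))"
proof -
  define mu0 where "mu0 = Min (insert 1 ((\<lambda>i. \<bar>lam i\<bar>) ` {i. lam i \<noteq> 0}))"
  define cc0 where "cc0 = 4 / mu0"
  define K00 where "K00 = sqrt cc0 + sqrt (real CARD('n) * (real CARD('n) * (2 * sqrt cc0))) + 2 * real CARD('n) / mu0"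
  have mu0: "mu0 > 0" using mu_props[of lam] unfolding mu0_def by simp
  have K00: "K00 \<ge> 0" using mu0 by (simp add: K00_def cc0_def)
  show ?thesis
  proof (intro exI[of _ "real CARD('n) * (real CARD('n) * K00)"] conjI allI impI)
    show "0 \<le> real CARD('n) * (real CARD('n) * K00)" using K00 by simp
    fix G :: "real^'n^'n" assume sG: "transpose G = G" and n1: "norm G \<le> 1"
    interpret d: dsetup lam G by unfold_locales (rule sG)
    have "d.K0 = K00" unfolding d.K0_def d.cc_def d.mu_def K00_def cc0_def mu0_def ..
    then show "norm (proj_onto KP (diagm lam + G) - diagm (\<lambda>i. max (lam i) 0) - Mmat lam G)
        \<le> real CARD('n) * (real CARD('n) * K00) * (norm G * sqrt (sqrt (norm G)))"
      using d.err_norm n1 unfolding d.P_def d.Z_def d.Lp_def d.h_def by (simp add: mult_ac)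
  qed
qed

theorem theorem5:
  fixes A :: "'m::finite \<Rightarrow> real^'n^'n" and b :: "real^'m" and C :: "real^'n^'n"
    and \<sigma> :: real and Z :: "nat \<Rightarrow> real^'n^'n"
    and Xs Ss :: "real^'n^'n" and ys :: "real^'m"
    and Q :: "real^'n^'n" and lam :: "'n \<Rightarrow> real"
  assumes symA: "\<And>i. transpose (A i) = A i"
    and symC: "transpose C = C"
    and surj: "\<forall>v. \<exists>X. transpose X = X \<and> opA A X = v"
    and sigma: "\<sigma> > 0"
    and Z0: "transpose (Z 0) = Z 0"
    and iter: "\<And>k. Z (Suc k) = admm_step A b C \<sigma> (Z k)"
    and KKT: "is_KKT A b C Xs ys Ss"
    and lim: "Z \<longlonglongrightarrow> Xs - \<sigma> *\<^sub>R Ss"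
    and orth: "orthogonal_matrix Q"
    and decZ: "Xs - \<sigma> *\<^sub>R Ss = Q ** diagm lam ** transpose Q"
    and decX: "Xs = Q ** diagm (\<lambda>i. max (lam i) 0) ** transpose Q"
    and decS: "\<sigma> *\<^sub>R Ss = Q ** diagm (\<lambda>i. - min (lam i) 0) ** transpose Q"
    and primal_nd: "NX Q lam \<inter> range (opAadj A) = {0}"
    and dual_nd: "NS Q lam \<inter> {H. opA A H = 0} = {0}"
  shows "(SUP H\<in>{H. transpose H = H \<and> norm H = 1}. norm (Mtilde A Q lam H)) < 1 \<and>
         (\<forall>\<rho>. (SUP H\<in>{H. transpose H = H \<and> norm H = 1}. norm (Mtilde A Q lam H)) < \<rho> \<and> \<rho> < 1 \<longrightarrow>
            (\<exists>K::nat. \<forall>k\<ge>K. norm (Z (k + 1) - (Xs - \<sigma> *\<^sub>R Ss))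
                          \<le> \<rho> * norm (Z k - (Xs - \<sigma> *\<^sub>R Ss))))"
proof -
  interpret Msetup A Q lam
    using surj orth primal_nd dual_nd by unfold_locales auto
  define rhoND where "rhoND = (SUP H\<in>{H. transpose H = H \<and> norm H = 1}. norm (Mtilde A Q lam H))"
  have r1: "rhoND < 1" unfolding rhoND_def by (rule sup_props(1))
  have r2: "\<And>H. transpose H = H \<Longrightarrow> norm (MM H) \<le> rhoND * norm H" unfolding rhoND_def by (rule sup_props(2))
  define Zs where "Zs = Xs - \<sigma> *\<^sub>R Ss"
  define T where "T = admm_step A b C \<sigma>"
  have cKP: "closed (KP :: (real^'n^'n) set)" "convex (KP :: (real^'n^'n) set)" "(KP :: (real^'n^'n) set) \<noteq> {}"
    using cone_KP unfolding is_cone_def by auto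
  have Pi_lip: "norm (projPSD X - projPSD Y) \<le> norm (X - Y)" for X Y :: "real^'n^'n"
    unfolding projPSD_KP by (rule proj_lip[OF cKP])
  have Tdiff: "T X - T Y = projP A ((X - Y) - 2 *\<^sub>R (projPSD X - projPSD Y)) + (projPSD X - projPSD Y)" for X Y
  proof -
    have e: "(X - 2 *\<^sub>R projPSD X) - (Y - 2 *\<^sub>R projPSD Y) = (X - Y) - 2 *\<^sub>R (projPSD X - projPSD Y)"
      by (simp add: scaleR_diff_right)
    have "T X - T Y = (projP A (X - 2 *\<^sub>R projPSD X) - projP A (Y - 2 *\<^sub>R projPSD Y)) + (projPSD X - projPSD Y)"
      unfolding T_def admm_step_def by (simp add: algebra_simps)
    also have "\<dots> = projP A ((X - Y) - 2 *\<^sub>R (projPSD X - projPSD Y)) + (projPSD X - projPSD Y)"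
      unfolding P_diff[symmetric] e ..
    finally show ?thesis .
  qed
  have T_lip: "norm (T X - T Y) \<le> 4 * norm (X - Y)" for X Y
  proof -
    let ?d = "projPSD X - projPSD Y"
    have "norm (T X - T Y) \<le> norm (projP A ((X - Y) - 2 *\<^sub>R ?d)) + norm ?d"
      unfolding Tdiff by (rule norm_triangle_ineq)
    also have "\<dots> \<le> norm ((X - Y) - 2 *\<^sub>R ?d) + norm ?d" using P_le by (intro add_mono) auto
    also have "\<dots> \<le> norm (X - Y) + 2 * norm ?d + norm ?d"
      using norm_triangle_ineq4[of "X - Y" "2 *\<^sub>R ?d"] by simp
    also have "\<dots> \<le> 4 * norm (X - Y)" using Pi_lip[of X Y] by simp
    finally show ?thesis .
  qed
  have Tcont: "isCont T x" for x
  proof -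
    have "continuous_on UNIV T"
    proof (rule lipschitz_on_continuous_on)
      show "4-lipschitz_on UNIV T" by (rule lipschitz_onI) (auto simp: dist_norm T_lip)
    qed
    then show ?thesis by (simp add: continuous_on_eq_continuous_at)
  qed
  have fixp: "T Zs = Zs"
  proof -
    have "(\<lambda>k. Z (Suc k)) \<longlonglongrightarrow> Zs" using lim unfolding Zs_def by (rule LIMSEQ_Suc)
    then have a: "(\<lambda>k. T (Z k)) \<longlonglongrightarrow> Zs" using iter unfolding T_def by simp
    have b: "(\<lambda>k. T (Z k)) \<longlonglongrightarrow> T Zs" using isCont_tendsto_compose[OF Tcont lim] unfolding Zs_def by simp
    show ?thesis using LIMSEQ_unique[OF b a] .
  qed
  have symT: "transpose (T X) = T X" for X
  proof -
    have s1: "transpose (projP A Y) = projP A Y" for Y unfolding projP_def by (rule sym_opAadj[OF symA])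
    have s2: "transpose (projPSD Y) = projPSD Y" for Y
      using cone_proj(1)[OF cone_KP] unfolding projPSD_KP KP_def psd_def by blast
    have s3: "transpose (opAadj A (matrix_inv (gramA A) *v b)) = opAadj A (matrix_inv (gramA A) *v b)"
      by (rule sym_opAadj[OF symA])
    show ?thesis unfolding T_def admm_step_def
      by (simp add: tr_add tr_diff transpose_scalar s1 s2 s3 symC)
  qed
  have symZ: "transpose (Z k) = Z k" for k
    by (cases k) (simp_all add: Z0 iter symT[unfolded T_def])
  have symZs: "transpose Zs = Zs" unfolding Zs_def decZ
    by (rule conj_sym) (simp add: vec_eq_iff tr_entry diagm_entry)
  obtain L where L0: "L \<ge> 0" and Lb: "\<And>G::real^'n^'n. transpose G = G \<Longrightarrow> norm G \<le> 1 \<Longrightarrow>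
     norm (proj_onto KP (diagm lam + G) - diagm (\<lambda>i. max (lam i) 0) - Mmat lam G)
        \<le> L * (norm G * sqrt (sqrt (norm G)))"
    using deriv_bound[of lam] by blast
  have est: "norm (T (Zs + H) - Zs) \<le> rhoND * norm H + L * (norm H * sqrt (sqrt (norm H)))"
    if sH: "transpose H = H" and h1: "norm H \<le> 1" for H
  proof -
    let ?Hh = "hatm Q H"
    have sHh: "transpose ?Hh = ?Hh" by (rule hat_sym[OF sH])
    have nHh: "norm ?Hh = norm H" by (rule norm_hat[OF orth])
    have z1: "Zs + H = Q ** (diagm lam + ?Hh) ** transpose Q"
      unfolding Zs_def decZ conj_add conj_hat[OF orth] ..
    have pi1: "projPSD (Zs + H) = Q ** proj_onto KP (diagm lam + ?Hh) ** transpose Q"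
      unfolding z1 projPSD_KP by (rule proj_conj[OF orth])
    have piZs: "projPSD Zs = Xs"
    proof -
      have "projPSD Zs = Q ** proj_onto KP (diagm lam) ** transpose Q"
        unfolding Zs_def decZ projPSD_KP by (rule proj_conj[OF orth])
      also have "\<dots> = Xs" unfolding proj_diag decX ..
      finally show ?thesis .
    qed
    define E where "E = projPSD (Zs + H) - projPSD Zs - DD H"
    have Eeq: "E = Q ** (proj_onto KP (diagm lam + ?Hh) - diagm (\<lambda>i. max (lam i) 0) - Mmat lam ?Hh) ** transpose Q"
      unfolding E_def pi1 piZs Dtilde_Mmat conj_diff by (subst decX) (rule refl)
    have En: "norm E \<le> L * (norm H * sqrt (sqrt (norm H)))"
      unfolding Eeq norm_conj[OF orth] using Lb[OF sHh] h1 nHh by simp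
    have "T (Zs + H) - Zs = T (Zs + H) - T Zs" using fixp by simp
    also have "\<dots> = projP A (H - 2 *\<^sub>R (DD H + E)) + (DD H + E)"
      unfolding Tdiff E_def by simp
    also have "\<dots> = MM H + (E - 2 *\<^sub>R projP A E)"
    proof -
      have two: "\<And>X::real^'n^'n. 2 * X = 2 *\<^sub>R X" by (simp add: vec_eq_iff)
      have "projP A (H - 2 *\<^sub>R (DD H + E)) = projP A H - 2 *\<^sub>R (projP A (DD H) + projP A E)"
        by (simp only: P_diff P_scale P_add)
      then show ?thesis unfolding Mt_eq P_diff by (simp add: algebra_simps two)
    qed
    finally have "norm (T (Zs + H) - Zs) \<le> norm (MM H) + norm (E - 2 *\<^sub>R projP A E)"
      by (simp add: norm_triangle_ineq)
    also have "\<dots> = norm (MM H) + norm E" by (simp add: refl_norm)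
    also have "\<dots> \<le> rhoND * norm H + L * (norm H * sqrt (sqrt (norm H)))"
      using r2[OF sH] En by simp
    finally show ?thesis .
  qed
  have part2: "\<exists>K::nat. \<forall>k\<ge>K. norm (Z (k + 1) - Zs) \<le> \<rho> * norm (Z k - Zs)"
    if rho: "rhoND < \<rho>" "\<rho> < 1" for \<rho>
  proof -
    define \<epsilon> where "\<epsilon> = \<rho> - rhoND"
    have ep: "\<epsilon> > 0" using rho by (simp add: \<epsilon>_def)
    define \<delta> where "\<delta> = min 1 ((\<epsilon> / (L + 1)) ^ 4)"
    have dp: "\<delta> > 0" using ep L0 by (simp add: \<delta>_def)
    obtain K where K: "\<And>k. k \<ge> K \<Longrightarrow> norm (Z k - Zs) < \<delta>"
      using lim dp unfolding Zs_def LIMSEQ_iff by blast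
    show ?thesis
    proof (intro exI allI impI)
      fix k assume k: "K \<le> k"
      define H where "H = Z k - Zs"
      have sH: "transpose H = H" unfolding H_def using symZ[of k] symZs by (simp add: tr_diff)
      have hd: "norm H < \<delta>" using K[OF k] by (simp add: H_def)
      then have h1: "norm H \<le> 1" by (simp add: \<delta>_def)
      have rt: "sqrt (sqrt (norm H)) \<le> \<epsilon> / (L + 1)"
      proof -
        have "norm H \<le> (\<epsilon> / (L + 1)) ^ 4" using hd by (simp add: \<delta>_def)
        then have "sqrt (sqrt (norm H)) \<le> sqrt (sqrt ((\<epsilon> / (L + 1)) ^ 4))"
          by (intro real_sqrt_le_mono)
        also have "sqrt (sqrt ((\<epsilon> / (L + 1)) ^ 4)) = \<epsilon> / (L + 1)"
        proof -
          define u where "u = \<epsilon> / (L + 1)"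
          have u0: "u \<ge> 0" using ep L0 by (simp add: u_def)
          have "u ^ 4 = (u\<^sup>2)\<^sup>2" by simp
          then have "sqrt (u ^ 4) = u\<^sup>2" by (simp only: real_sqrt_abs abs_power2)
          then have "sqrt (sqrt (u ^ 4)) = u" using u0 by simp
          then show ?thesis by (simp add: u_def)
        qed
        finally show ?thesis .
      qed
      have "L * sqrt (sqrt (norm H)) \<le> L * (\<epsilon> / (L + 1))" using rt L0 by (rule mult_left_mono)
      also have "\<dots> \<le> \<epsilon>" using ep L0 by (simp add: field_simps)
      finally have Le: "L * sqrt (sqrt (norm H)) \<le> \<epsilon>" .
      have "Z (k + 1) = T (Zs + H)" by (simp add: iter T_def H_def)
      then have "norm (Z (k + 1) - Zs) \<le> rhoND * norm H + L * (norm H * sqrt (sqrt (norm H)))"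
        using est[OF sH h1] by simp
      also have "\<dots> = rhoND * norm H + (L * sqrt (sqrt (norm H))) * norm H" by (simp add: mult_ac)
      also have "\<dots> \<le> rhoND * norm H + \<epsilon> * norm H" using Le by (intro add_left_mono mult_right_mono) auto
      also have "\<dots> = \<rho> * norm (Z k - Zs)" by (simp add: \<epsilon>_def H_def algebra_simps)
      finally show "norm (Z (k + 1) - Zs) \<le> \<rho> * norm (Z k - Zs)" .
    qed
  qed
  show ?thesis
    using r1 part2 unfolding rhoND_def Zs_def by blast
qed

end
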